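(* Let $\mathbf{A}\in\mathbb{R}^{n\times d}$, $\mathbf{B}\in\mathbb{R}^{n\times d_B}$, $\mathbf{C}\in\mathbb{R}^{n_C\times d}$, let $\mathbf{Y}=\mathrm{diag}(y_1,\dots,y_{d_B})$, $\mathbf{Z}=\mathrm{diag}(z_1,\dots,z_{n_C})$ with variables $y_i,z_j$, and let $k,r$ be integers with $0\le k\le\mathrm{rank}(\mathbf{B})$, $0\le r\le\mathrm{rank}(\mathbf{C})$. For any $S\subset[d_B]$ of size $k$ and $R\subset[n_C]$ of size $r$, $$\det[\mathbf{C}_{R,:}(\mathbf{C}_{R,:})^{\rm T}]\det[(\mathbf{B}_{:,S})^{\rm T}\mathbf{B}_{:,S}]\,p_{S,R}(xw;\mathbf{A},\mathbf{B},\mathbf{C})=(-1)^{k+r}x^r w^{d+k-n}\,\partial_{\mathbf{Y}^{S^C}}\partial_{\mathbf{Z}^{R^C}}H(x,w,\mathbf{Y},\mathbf{Z};\mathbf{A},\mathbf{B},\mathbf{C})\Big|_{y_i=0\,\forall i,\ z_j=0\,\forall j},$$ where $\partial_{\mathbf{Y}^{S^C}}=\prod_{i\in[d_B]\setminus S}\partial_{y_i}$ and $\partial_{\mathbf{Z}^{R^C}}=\prod_{j\in[n_C]\setminus R}\partial_{z_j}$.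
   Context: Notation: $\mathbf{M}_{R,S}$, $\mathbf{M}_{:,S}$, $\mathbf{M}_{R,:}$ are submatrices; $\mathbf{M}^\dagger$ Moore–Penrose pseudoinverse with $\mathbf{M}_{R,S}^\dagger:=(\mathbf{M}_{R,S})^\dagger$; empty determinants are $1$ and $\mathbf{M}_{:,\emptyset}\mathbf{M}_{:,\emptyset}^\dagger$, $\mathbf{M}_{\emptyset,:}^\dagger\mathbf{M}_{\emptyset,:}$ are zero. $\mathbf{Q}_S=\mathbf{I}_n-\mathbf{B}_{:,S}\mathbf{B}_{:,S}^\dagger$, $\mathbf{P}_R=\mathbf{I}_d-\mathbf{C}_{R,:}^\dagger\mathbf{C}_{R,:}$, $p_{S,R}(x;\mathbf{A},\mathbf{B},\mathbf{C})=\det[x\mathbf{I}_d-(\mathbf{Q}_S\mathbf{A}\mathbf{P}_R)^{\rm T}(\mathbf{Q}_S\mathbf{A}\mathbf{P}_R)]$. Define $$H(x,w,\mathbf{Y},\mathbf{Z};\mathbf{A},\mathbf{B},\mathbf{C})=\det\begin{pmatrix} w\mathbf{I}_n&\mathbf{0}&\mathbf{B}&\mathbf{A}\\ \mathbf{0}&\mathbf{Z}&\mathbf{0}&\mathbf{C}\\ \mathbf{B}^{\rm T}&\mathbf{0}&\mathbf{Y}&\mathbf{0}\\ \mathbf{A}^{\rm T}&\mathbf{C}^{\rm T}&\mathbf{0}&x\mathbf{I}_d\end{pmatrix}.$$ *)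

theory Defs
  imports "HOL-Analysis.Analysis" "Jordan_Normal_Form.DL_Rank" "Jordan_Normal_Form.DL_Submatrix"
begin

definition pinv :: "real mat \<Rightarrow> real mat" where
  "pinv M = (THE X. X \<in> carrier_mat (dim_col M) (dim_row M) \<and>
                    M * X * M = M \<and> X * M * X = X \<and>
                    transpose_mat (M * X) = M * X \<and> transpose_mat (X * M) = X * M)"

definition cols_sub :: "real mat \<Rightarrow> nat set \<Rightarrow> real mat" where
  "cols_sub M S = submatrix M {0..<dim_row M} S"

definition rows_sub :: "real mat \<Rightarrow> nat set \<Rightarrow> real mat" where
  "rows_sub M R = submatrix M R {0..<dim_col M}"

definition Qmat :: "real mat \<Rightarrow> nat set \<Rightarrow> real mat" where
  "Qmat B S = 1\<^sub>m (dim_row B) - cols_sub B S * pinv (cols_sub B S)"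

definition Pmat :: "real mat \<Rightarrow> nat set \<Rightarrow> real mat" where
  "Pmat C R = 1\<^sub>m (dim_col C) - pinv (rows_sub C R) * rows_sub C R"

definition pSR :: "nat set \<Rightarrow> nat set \<Rightarrow> real \<Rightarrow> real mat \<Rightarrow> real mat \<Rightarrow> real mat \<Rightarrow> real" where
  "pSR S R x A B C =
     (let M = Qmat B S * A * Pmat C R
      in det (x \<cdot>\<^sub>m 1\<^sub>m (dim_col A) - transpose_mat M * M))"

definition Hdet :: "real \<Rightarrow> real \<Rightarrow> (nat \<Rightarrow> real) \<Rightarrow> (nat \<Rightarrow> real) \<Rightarrow>
                    real mat \<Rightarrow> real mat \<Rightarrow> real mat \<Rightarrow> real" where
  "Hdet x w y z A B C =
     (let n = dim_row A; d = dim_col A; dB = dim_col B; nC = dim_row C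
      in det (four_block_mat
               (four_block_mat (w \<cdot>\<^sub>m 1\<^sub>m n) (0\<^sub>m n nC) (0\<^sub>m nC n) (mat_diag nC z))
               (four_block_mat B A (0\<^sub>m nC dB) C)
               (four_block_mat (transpose_mat B) (0\<^sub>m dB nC) (transpose_mat A) (transpose_mat C))
               (four_block_mat (mat_diag dB y) (0\<^sub>m dB d) (0\<^sub>m d dB) (x \<cdot>\<^sub>m 1\<^sub>m d))))"

definition partial :: "'v \<Rightarrow> (('v \<Rightarrow> real) \<Rightarrow> real) \<Rightarrow> ('v \<Rightarrow> real) \<Rightarrow> real" where
  "partial i f p = deriv (\<lambda>t. f (p(i := t))) (p i)"

fun pderivs :: "'v list \<Rightarrow> (('v \<Rightarrow> real) \<Rightarrow> real) \<Rightarrow> ('v \<Rightarrow> real) \<Rightarrow> real" where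
  "pderivs [] f = f"
| "pderivs (i # is) f = partial i (pderivs is f)"

definition Hvar :: "real \<Rightarrow> real \<Rightarrow> real mat \<Rightarrow> real mat \<Rightarrow> real mat \<Rightarrow> (nat + nat \<Rightarrow> real) \<Rightarrow> real" where
  "Hvar x w A B C v = Hdet x w (\<lambda>i. v (Inl i)) (\<lambda>j. v (Inr j)) A B C"

end

theory Submission
  imports Defs
begin

definition uset :: "real mat \<Rightarrow> nat set \<Rightarrow> real mat" where
  "uset M U = mat (dim_row M) (dim_col M)
     (\<lambda>(i,j). if i \<in> U \<or> j \<in> U then (if i = j then 1 else 0) else M $$ (i,j))"

definition dupd :: "real mat \<Rightarrow> nat \<Rightarrow> real \<Rightarrow> real mat" where
  "dupd M i t = mat (dim_row M) (dim_col M) (\<lambda>(a,b). if a = i \<and> b = i then t else M $$ (a,b))"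

lemma uset_carrier[simp]: "M \<in> carrier_mat m m \<Longrightarrow> uset M U \<in> carrier_mat m m"
  unfolding uset_def by auto

lemma dupd_carrier[simp]: "M \<in> carrier_mat m m \<Longrightarrow> dupd M i t \<in> carrier_mat m m"
  unfolding dupd_def by auto

lemma uset_empty: "uset M {} = M"
  unfolding uset_def by (rule eq_matI) auto

lemma uset_uset: "uset (uset M U) W = uset M (U \<union> W)"
  unfolding uset_def by (rule eq_matI) auto

lemma uset_dupd: "i \<notin> U \<Longrightarrow> uset (dupd M i t) U = dupd (uset M U) i t"
  unfolding uset_def dupd_def by (rule eq_matI) auto

lemma mat_delete_dupd: "mat_delete (dupd M i t) i j = mat_delete M i j"
  unfolding mat_delete_def dupd_def by (rule eq_matI) auto

lemma mat_delete_uset: "mat_delete (uset M {i}) i i = mat_delete M i i"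
  unfolding mat_delete_def uset_def by (rule eq_matI) auto

lemma det_dupd_affine:
  assumes M: "M \<in> carrier_mat m m" and i: "i < m"
  shows "det (dupd M i t) = det (dupd M i 0) + t * det (uset M {i})"
proof -
  have cof: "cofactor (dupd M i s) i j = cofactor M i j" for s j
    unfolding cofactor_def mat_delete_dupd ..
  have e: "det (dupd M i s) = (\<Sum>j<m. (if j = i then 0 else M $$ (i,j)) * cofactor M i j) + s * cofactor M i i" for s
  proof -
    have "det (dupd M i s) = (\<Sum>j<m. dupd M i s $$ (i,j) * cofactor (dupd M i s) i j)"
      by (rule laplace_expansion_row[OF dupd_carrier[OF M] i])
    also have "\<dots> = (\<Sum>j<m. (if j = i then 0 else M $$ (i,j)) * cofactor M i j + (if j = i then s * cofactor M i i else 0))"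
      unfolding cof using M i by (intro sum.cong) (auto simp: dupd_def)
    also have "\<dots> = (\<Sum>j<m. (if j = i then 0 else M $$ (i,j)) * cofactor M i j) + s * cofactor M i i"
      using i by (simp add: sum.distrib)
    finally show ?thesis .
  qed
  have u: "det (uset M {i}) = cofactor M i i"
  proof -
    have "det (uset M {i}) = (\<Sum>j<m. uset M {i} $$ (i,j) * cofactor (uset M {i}) i j)"
      by (rule laplace_expansion_row[OF uset_carrier[OF M] i])
    also have "\<dots> = (\<Sum>j<m. (if j = i then cofactor M i i else 0))"
    proof (intro sum.cong refl)
      fix j assume "j \<in> {..<m}"
      have c: "cofactor (uset M {i}) i i = cofactor M i i"
        unfolding cofactor_def mat_delete_uset ..
      show "uset M {i} $$ (i,j) * cofactor (uset M {i}) i j = (if j = i then cofactor M i i else 0)"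
      proof (cases "j = i")
        case True
        then show ?thesis using c M i by (simp add: uset_def)
      next
        case False
        then show ?thesis using M i \<open>j \<in> {..<m}\<close> by (simp add: uset_def)
      qed
    qed
    also have "\<dots> = cofactor M i i" using i by simp
    finally show ?thesis .
  qed
  show ?thesis using e[of t] e[of 0] u by simp
qed

lemma deriv_affine: "deriv (\<lambda>t. a + t * (b::real)) x = b"
proof -
  have "((\<lambda>t. a + t * b) has_field_derivative b) (at x)"
    by (auto intro!: derivative_eq_intros)
  thus ?thesis by (simp add: DERIV_imp_deriv)
qed

lemma pderivs_det_gen:
  fixes Mf :: "('v \<Rightarrow> real) \<Rightarrow> real mat"
  assumes car: "\<And>p. Mf p \<in> carrier_mat m m"
    and inj: "inj_on pos V" and posm: "\<And>v. v \<in> V \<Longrightarrow> pos v < m"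
    and upd: "\<And>p v t. v \<in> V \<Longrightarrow> Mf (p(v := t)) = dupd (Mf p) (pos v) t"
    and dist: "distinct vs" and sub: "set vs \<subseteq> V"
  shows "pderivs vs (\<lambda>p. det (Mf p)) = (\<lambda>p. det (uset (Mf p) (pos ` set vs)))"
  using dist sub
proof (induction vs)
  case Nil
  then show ?case by (simp add: uset_empty)
next
  case (Cons v vs)
  let ?U = "pos ` set vs"
  have vV: "v \<in> V" using Cons by auto
  have nU: "pos v \<notin> ?U" using Cons inj by (auto dest: inj_onD)
  show ?case
  proof
    fix p
    have "pderivs (v # vs) (\<lambda>p. det (Mf p)) p = partial v (\<lambda>p. det (uset (Mf p) ?U)) p"
      using Cons by simp
    also have "\<dots> = deriv (\<lambda>t. det (dupd (uset (Mf p) ?U) (pos v) t)) (p v)"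
      unfolding partial_def upd[OF vV] uset_dupd[OF nU] ..
    also have "\<dots> = deriv (\<lambda>t. det (dupd (uset (Mf p) ?U) (pos v) 0) + t * det (uset (uset (Mf p) ?U) {pos v})) (p v)"
      by (subst det_dupd_affine[OF uset_carrier[OF car] posm[OF vV]]) (rule refl)
    also have "\<dots> = det (uset (uset (Mf p) ?U) {pos v})" by (rule deriv_affine)
    also have "\<dots> = det (uset (Mf p) (pos ` set (v # vs)))" by (simp add: uset_uset Un_commute)
    finally show "pderivs (v # vs) (\<lambda>p. det (Mf p)) p = det (uset (Mf p) (pos ` set (v # vs)))" .
  qed
qed

definition Hmat :: "real \<Rightarrow> real \<Rightarrow> (nat \<Rightarrow> real) \<Rightarrow> (nat \<Rightarrow> real) \<Rightarrow>
                    real mat \<Rightarrow> real mat \<Rightarrow> real mat \<Rightarrow> real mat" where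
  "Hmat x w y z A B C =
     (let n = dim_row A; d = dim_col A; dB = dim_col B; nC = dim_row C
      in four_block_mat
               (four_block_mat (w \<cdot>\<^sub>m 1\<^sub>m n) (0\<^sub>m n nC) (0\<^sub>m nC n) (mat_diag nC z))
               (four_block_mat B A (0\<^sub>m nC dB) C)
               (four_block_mat (transpose_mat B) (0\<^sub>m dB nC) (transpose_mat A) (transpose_mat C))
               (four_block_mat (mat_diag dB y) (0\<^sub>m dB d) (0\<^sub>m d dB) (x \<cdot>\<^sub>m 1\<^sub>m d)))"

lemma Hdet_Hmat: "Hdet x w y z A B C = det (Hmat x w y z A B C)"
  unfolding Hdet_def Hmat_def Let_def ..

lemma Hmat_carrier:
  assumes "A \<in> carrier_mat n d" "B \<in> carrier_mat n dB" "C \<in> carrier_mat nC d"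
  shows "Hmat x w y z A B C \<in> carrier_mat (n+nC+dB+d) (n+nC+dB+d)"
  using assms unfolding Hmat_def Let_def carrier_mat_def mat_diag_def by simp

lemma dupd_fb_A:
  assumes "A \<in> carrier_mat a a" "B \<in> carrier_mat a b" "C \<in> carrier_mat b a" "D \<in> carrier_mat b b" "i < a"
  shows "dupd (four_block_mat A B C D) i t = four_block_mat (dupd A i t) B C D"
  using assms unfolding dupd_def by (intro eq_matI) auto

lemma dupd_fb_D:
  assumes "A \<in> carrier_mat a a" "B \<in> carrier_mat a b" "C \<in> carrier_mat b a" "D \<in> carrier_mat b b" "i < b"
  shows "dupd (four_block_mat A B C D) (a + i) t = four_block_mat A B C (dupd D i t)"
  using assms unfolding dupd_def by (intro eq_matI) auto

lemma mat_diag_upd: "i < m \<Longrightarrow> mat_diag m (f(i := t)) = dupd (mat_diag m f) i t"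
  unfolding dupd_def mat_diag_def by (intro eq_matI) auto

lemma Hmat_upd_y:
  assumes "A \<in> carrier_mat n d" "B \<in> carrier_mat n dB" "C \<in> carrier_mat nC d" "i < dB"
  shows "Hmat x w (y(i := t)) z A B C = dupd (Hmat x w y z A B C) (n+nC+i) t"
proof -
  have dims: "dim_row A = n" "dim_col A = d" "dim_row B = n" "dim_col B = dB" "dim_row C = nC" "dim_col C = d"
    using assms by auto
  show ?thesis
    unfolding Hmat_def Let_def dims
    using assms
    apply (subst dupd_fb_D[where a="n+nC" and b = "dB+d"])
    apply (simp_all add: four_block_carrier_mat)
    apply (subst dupd_fb_A[where a="dB" and b = "d"])
    apply (simp_all add: mat_diag_upd)
    done
qed

lemma Hmat_upd_z:
  assumes "A \<in> carrier_mat n d" "B \<in> carrier_mat n dB" "C \<in> carrier_mat nC d" "j < nC"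
  shows "Hmat x w y (z(j := t)) A B C = dupd (Hmat x w y z A B C) (n+j) t"
proof -
  have dims: "dim_row A = n" "dim_col A = d" "dim_row B = n" "dim_col B = dB" "dim_row C = nC" "dim_col C = d"
    using assms by auto
  show ?thesis
    unfolding Hmat_def Let_def dims
    using assms
    apply (subst dupd_fb_A[where a="n+nC" and b = "dB+d"])
    apply (simp_all add: four_block_carrier_mat)
    apply (subst dupd_fb_D[where a="n" and b = "nC"])
    apply (simp_all add: mat_diag_upd)
    done
qed

lemma pderivs_Hvar:
  assumes A: "A \<in> carrier_mat n d" and B: "B \<in> carrier_mat n dB" and C: "C \<in> carrier_mat nC d"
  shows "pderivs (map Inl (sorted_list_of_set ({0..<dB} - S)) @ map Inr (sorted_list_of_set ({0..<nC} - R)))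
           (Hvar x w A B C) p =
         det (uset (Hmat x w (\<lambda>i. p (Inl i)) (\<lambda>j. p (Inr j)) A B C)
              ((\<lambda>i. n+nC+i) ` ({0..<dB} - S) \<union> (\<lambda>j. n+j) ` ({0..<nC} - R)))"
proof -
  define Mf where "Mf = (\<lambda>p::nat+nat\<Rightarrow>real. Hmat x w (\<lambda>i. p (Inl i)) (\<lambda>j. p (Inr j)) A B C)"
  define pos :: "nat+nat \<Rightarrow> nat" where "pos = case_sum (\<lambda>i. n+nC+i) (\<lambda>j. n+j)"
  define V :: "(nat+nat) set" where "V = Inl ` {0..<dB} \<union> Inr ` {0..<nC}"
  define vs where "vs = map Inl (sorted_list_of_set ({0..<dB} - S)) @ map Inr (sorted_list_of_set ({0..<nC} - R))"
  have H: "Hvar x w A B C = (\<lambda>p. det (Mf p))"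
    unfolding Mf_def Hvar_def Hdet_Hmat ..
  have car: "Mf p \<in> carrier_mat (n+nC+dB+d) (n+nC+dB+d)" for p
    unfolding Mf_def by (rule Hmat_carrier[OF A B C])
  have inj: "inj_on pos V" unfolding inj_on_def pos_def V_def by auto
  have posm: "pos v < n+nC+dB+d" if "v \<in> V" for v using that unfolding pos_def V_def by auto
  have upd: "Mf (p(v := t)) = dupd (Mf p) (pos v) t" if "v \<in> V" for p v t
  proof -
    from that obtain i where "(v = Inl i \<and> i < dB) \<or> (v = Inr i \<and> i < nC)" unfolding V_def by auto
    then show ?thesis
    proof
      assume a: "v = Inl i \<and> i < dB"
      have e1: "(\<lambda>i'. (p(v := t)) (Inl i')) = (\<lambda>i'. p (Inl i'))(i := t)" using a by auto
      have e2: "(\<lambda>j. (p(v := t)) (Inr j)) = (\<lambda>j. p (Inr j))" using a by auto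
      show ?thesis unfolding Mf_def e1 e2 using a Hmat_upd_y[OF A B C] by (simp add: pos_def)
    next
      assume a: "v = Inr i \<and> i < nC"
      have e1: "(\<lambda>i'. (p(v := t)) (Inr i')) = (\<lambda>i'. p (Inr i'))(i := t)" using a by auto
      have e2: "(\<lambda>j. (p(v := t)) (Inl j)) = (\<lambda>j. p (Inl j))" using a by auto
      show ?thesis unfolding Mf_def e1 e2 using a Hmat_upd_z[OF A B C] by (simp add: pos_def)
    qed
  qed
  have dist: "distinct vs" unfolding vs_def by (auto simp: distinct_map inj_on_def)
  have sub: "set vs \<subseteq> V" unfolding vs_def V_def by auto
  have "pderivs vs (\<lambda>p. det (Mf p)) = (\<lambda>p. det (uset (Mf p) (pos ` set vs)))"
    by (rule pderivs_det_gen[OF car inj posm upd dist sub])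
  moreover have "pos ` set vs = (\<lambda>i. n+nC+i) ` ({0..<dB} - S) \<union> (\<lambda>j. n+j) ` ({0..<nC} - R)"
    unfolding vs_def pos_def by (auto simp: image_Un image_image)
  ultimately show ?thesis unfolding H vs_def Mf_def by simp
qed

lemma det_perm_conj:
  fixes N :: "real mat"
  assumes N: "N \<in> carrier_mat m m" and bij: "bij_betw \<pi> {0..<m} {0..<m}"
  shows "det (mat m m (\<lambda>(i,j). N $$ (\<pi> i, \<pi> j))) = det N"
proof -
  have pim: "\<pi> i < m" if "i < m" for i using bij that unfolding bij_betw_def by auto
  have pinj: "\<pi> i = \<pi> j \<longleftrightarrow> i = j" if "i < m" "j < m" for i j
    using bij that unfolding bij_betw_def inj_on_def by auto
  define P where "P = mat m m (\<lambda>(i,j). if i = \<pi> j then 1 else (0::real))"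
  have P: "P \<in> carrier_mat m m" unfolding P_def by auto
  have NP: "N * P = mat m m (\<lambda>(i,j). N $$ (i, \<pi> j))"
  proof (rule eq_matI)
    fix i j assume ij: "i < dim_row (mat m m (\<lambda>(i,j). N $$ (i, \<pi> j)))" "j < dim_col (mat m m (\<lambda>(i,j). N $$ (i, \<pi> j)))"
    then have i: "i < m" and j: "j < m" by auto
    have "(N * P) $$ (i,j) = (\<Sum>k\<in>{0..<m}. N $$ (i,k) * (if k = \<pi> j then 1 else 0))"
      using N P i j unfolding P_def by (simp add: scalar_prod_def)
    also have "\<dots> = N $$ (i, \<pi> j)" using pim[OF j] by (simp add: if_distrib cong: if_cong)
    finally show "(N * P) $$ (i,j) = mat m m (\<lambda>(i,j). N $$ (i, \<pi> j)) $$ (i,j)" using i j by simp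
  qed (use N P in auto)
  have PNP: "transpose_mat P * (N * P) = mat m m (\<lambda>(i,j). N $$ (\<pi> i, \<pi> j))"
  proof (rule eq_matI)
    fix i j assume ij: "i < dim_row (mat m m (\<lambda>(i,j). N $$ (\<pi> i, \<pi> j)))" "j < dim_col (mat m m (\<lambda>(i,j). N $$ (\<pi> i, \<pi> j)))"
    then have i: "i < m" and j: "j < m" by auto
    have "(transpose_mat P * (N * P)) $$ (i,j) = (\<Sum>k\<in>{0..<m}. (if k = \<pi> i then 1 else 0) * N $$ (k, \<pi> j))"
      using N P i j unfolding NP unfolding P_def by (simp add: scalar_prod_def)
    also have "\<dots> = (\<Sum>k\<in>{0..<m}. (if k = \<pi> i then N $$ (k, \<pi> j) else 0))"
      by (rule sum.cong) auto
    also have "\<dots> = N $$ (\<pi> i, \<pi> j)" using pim[OF i] by simp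
    finally show "(transpose_mat P * (N * P)) $$ (i,j) = mat m m (\<lambda>(i,j). N $$ (\<pi> i, \<pi> j)) $$ (i,j)" using i j by simp
  qed (use N P in auto)
  have PP: "transpose_mat P * P = 1\<^sub>m m"
  proof (rule eq_matI)
    fix i j assume ij: "i < dim_row (1\<^sub>m m :: real mat)" "j < dim_col (1\<^sub>m m :: real mat)"
    then have i: "i < m" and j: "j < m" by auto
    have "(transpose_mat P * P) $$ (i,j) = (\<Sum>k\<in>{0..<m}. (if k = \<pi> i then 1 else 0) * (if k = \<pi> j then 1 else (0::real)))"
      using P i j unfolding P_def by (simp add: scalar_prod_def)
    also have "\<dots> = (if \<pi> i = \<pi> j then 1 else 0)" using pim[OF i] by (simp add: if_distrib cong: if_cong)
    finally show "(transpose_mat P * P) $$ (i,j) = 1\<^sub>m m $$ (i,j)" using i j pinj[OF i j] by simp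
  qed (use P in auto)
  have "det (transpose_mat P) * det P = 1"
    using det_mult[of "transpose_mat P" m P] P PP by simp
  moreover have "det (transpose_mat P * (N * P)) = det (transpose_mat P) * (det N * det P)"
    using det_mult[of "transpose_mat P" m "N * P"] det_mult[OF N P] N P by simp
  ultimately show ?thesis unfolding PNP[symmetric] by (simp add: algebra_simps)
qed

lemma det_uset_compress:
  fixes M :: "real mat"
  assumes M: "M \<in> carrier_mat m m" and U: "U \<subseteq> {0..<m}"
    and g: "inj_on g {0..<t}" and gim: "g ` {0..<t} = {0..<m} - U"
  shows "det (uset M U) = det (mat t t (\<lambda>(i,j). M $$ (g i, g j)))"
proof -
  have fU: "finite U" using U finite_subset by blast
  have "card ({0..<m} - U) = m - card U" using U fU by (simp add: card_Diff_subset)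
  moreover have "card (g ` {0..<t}) = t" using g by (simp add: card_image)
  moreover have "card U \<le> m" using U by (metis card_atLeastLessThan card_mono finite_atLeastLessThan diff_zero)
  ultimately have m: "m = t + card U" using gim by simp
  obtain h where h: "bij_betw h {0..<card U} U" using ex_bij_betw_nat_finite[OF fU] by blast
  define \<pi> where "\<pi> i = (if i < t then g i else h (i - t))" for i
  have gU: "g i \<notin> U" "g i < m" if "i < t" for i using gim that by auto
  have hU1: "h i \<in> U" if "i < card U" for i using h that unfolding bij_betw_def by auto
  have hU: "h i \<in> U" "h i < m" if "i < card U" for i using hU1[OF that] U by auto
  have hinj: "h i = h j \<longleftrightarrow> i = j" if "i < card U" "j < card U" for i j
    using h that unfolding bij_betw_def inj_on_def by auto
  have pinj: "inj_on \<pi> {0..<m}"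
  proof (rule inj_onI)
    fix i j assume i: "i \<in> {0..<m}" and j: "j \<in> {0..<m}" and e: "\<pi> i = \<pi> j"
    show "i = j"
    proof (cases "i < t"; cases "j < t")
      assume "i < t" "j < t" then show ?thesis using e g unfolding \<pi>_def inj_on_def by auto
    next
      assume a: "i < t" "\<not> j < t"
      then have "j - t < card U" using j m by auto
      then show ?thesis using a e gU[of i] hU[of "j-t"] unfolding \<pi>_def by auto
    next
      assume a: "\<not> i < t" "j < t"
      then have "i - t < card U" using i m by auto
      then show ?thesis using a e gU[of j] hU[of "i-t"] unfolding \<pi>_def by auto
    next
      assume a: "\<not> i < t" "\<not> j < t"
      then have "i - t < card U" "j - t < card U" using i j m by auto
      then have "i - t = j - t" using a e hinj[of "i-t" "j-t"] unfolding \<pi>_def by auto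
      then show ?thesis using a by arith
    qed
  qed
  have pim: "\<pi> ` {0..<m} \<subseteq> {0..<m}" using gU hU m unfolding \<pi>_def by auto
  have bij: "bij_betw \<pi> {0..<m} {0..<m}"
    unfolding bij_betw_def using pinj endo_inj_surj[OF _ pim pinj] by auto
  have UM: "uset M U \<in> carrier_mat m m" using M by simp
  have "det (uset M U) = det (mat m m (\<lambda>(i,j). uset M U $$ (\<pi> i, \<pi> j)))"
    using det_perm_conj[OF UM bij] by simp
  also have "mat m m (\<lambda>(i,j). uset M U $$ (\<pi> i, \<pi> j)) =
     four_block_mat (mat t t (\<lambda>(i,j). M $$ (g i, g j))) (0\<^sub>m t (card U)) (0\<^sub>m (card U) t) (1\<^sub>m (card U))"
  proof (rule eq_matI)
    fix i j assume "i < dim_row (four_block_mat (mat t t (\<lambda>(i,j). M $$ (g i, g j))) (0\<^sub>m t (card U)) (0\<^sub>m (card U) t) (1\<^sub>m (card U)))"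
      "j < dim_col (four_block_mat (mat t t (\<lambda>(i,j). M $$ (g i, g j))) (0\<^sub>m t (card U)) (0\<^sub>m (card U) t) (1\<^sub>m (card U)))"
    then have i: "i < m" and j: "j < m" using m by auto
    show "mat m m (\<lambda>(i,j). uset M U $$ (\<pi> i, \<pi> j)) $$ (i,j) = four_block_mat (mat t t (\<lambda>(i,j). M $$ (g i, g j))) (0\<^sub>m t (card U)) (0\<^sub>m (card U) t) (1\<^sub>m (card U)) $$ (i,j)"
    proof (cases "i < t"; cases "j < t")
      assume "i < t" "j < t" then show ?thesis using i j m M gU[of i] gU[of j] unfolding \<pi>_def uset_def by auto
    next
      assume a: "i < t" "\<not> j < t"
      then have "j - t < card U" using j m by auto
      then show ?thesis using a i j m M gU[of i] hU[of "j-t"] unfolding \<pi>_def uset_def by auto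
    next
      assume a: "\<not> i < t" "j < t"
      then have "i - t < card U" using i m by auto
      then show ?thesis using a i j m M gU[of j] hU[of "i-t"] unfolding \<pi>_def uset_def by auto
    next
      assume a: "\<not> i < t" "\<not> j < t"
      then have b: "i - t < card U" "j - t < card U" using i j m by auto
      have "(i - t = j - t) = (i = j)" using a by arith
      then show ?thesis using a b i j m M hinj[of "i-t" "j-t"] hU[of "i-t"] hU[of "j-t"] unfolding \<pi>_def uset_def by auto
    qed
  qed (use m in auto)
  also have "det \<dots> = det (mat t t (\<lambda>(i,j). M $$ (g i, g j)))"
    by (subst det_four_block_mat_lower_left_zero[of _ t _ "card U"]) auto
  finally show ?thesis .
qed

lemma pick_atLeast0: "i < n \<Longrightarrow> pick {0..<n} i = i"
proof -
  assume i: "i < n"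
  have "{a. a < n \<and> a \<in> UNIV} = {0..<n}" by auto
  moreover have "i < card {a. a < n \<and> a \<in> (UNIV::nat set)}" using i by simp
  ultimately show ?thesis using pick_reduce_set[of i n UNIV] pick_UNIV by simp
qed

lemma pick_inj: "a < card S \<Longrightarrow> b < card S \<Longrightarrow> pick S a = pick S b \<Longrightarrow> a = b"
  by (metis card_pick_le)

lemma pick_surj: "finite S \<Longrightarrow> x \<in> S \<Longrightarrow> \<exists>a < card S. pick S a = x"
proof -
  assume f: "finite S" and x: "x \<in> S"
  have "{a\<in>S. a < x} \<subset> S" using x by auto
  then have "card {a\<in>S. a < x} < card S" using f by (simp add: psubset_card_mono)
  then show ?thesis using pick_card_in_set[OF x] by blast
qed

lemma cols_sub_carrier:
  assumes "B \<in> carrier_mat n dB" "S \<subseteq> {0..<dB}"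
  shows "cols_sub B S \<in> carrier_mat n (card S)"
proof -
  have "{j. j < dB \<and> j \<in> S} = S" "{i. i < n \<and> i \<in> {0..<n}} = {0..<n}" using assms by auto
  then show ?thesis using assms unfolding cols_sub_def carrier_mat_def by (simp add: dim_submatrix)
qed

lemma cols_sub_index:
  assumes "B \<in> carrier_mat n dB" "S \<subseteq> {0..<dB}" "i < n" "a < card S"
  shows "cols_sub B S $$ (i,a) = B $$ (i, pick S a)"
proof -
  have "{j. j < dB \<and> j \<in> S} = S" "{i. i < n \<and> i \<in> {0..<n}} = {0..<n}" using assms by auto
  then show ?thesis using assms unfolding cols_sub_def
    by (subst submatrix_index) (auto simp: pick_atLeast0)
qed

lemma rows_sub_carrier:
  assumes "C \<in> carrier_mat nC d" "R \<subseteq> {0..<nC}"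
  shows "rows_sub C R \<in> carrier_mat (card R) d"
proof -
  have "{j. j < nC \<and> j \<in> R} = R" "{i. i < d \<and> i \<in> {0..<d}} = {0..<d}" using assms by auto
  then show ?thesis using assms unfolding rows_sub_def carrier_mat_def by (simp add: dim_submatrix)
qed

lemma rows_sub_index:
  assumes "C \<in> carrier_mat nC d" "R \<subseteq> {0..<nC}" "a < card R" "j < d"
  shows "rows_sub C R $$ (a,j) = C $$ (pick R a, j)"
proof -
  have "{j. j < nC \<and> j \<in> R} = R" "{i. i < d \<and> i \<in> {0..<d}} = {0..<d}" using assms by auto
  then show ?thesis using assms unfolding rows_sub_def
    by (subst submatrix_index) (auto simp: pick_atLeast0)
qed

definition Mc :: "real \<Rightarrow> real \<Rightarrow> real mat \<Rightarrow> real mat \<Rightarrow> real mat \<Rightarrow> real mat" where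
  "Mc x w A BS CR = (let n = dim_row A; d = dim_col A; k = dim_col BS; r = dim_row CR in
     four_block_mat
       (four_block_mat (w \<cdot>\<^sub>m 1\<^sub>m n) BS (transpose_mat BS) (0\<^sub>m k k))
       (four_block_mat (0\<^sub>m n r) A (0\<^sub>m k r) (0\<^sub>m k d))
       (four_block_mat (0\<^sub>m r n) (0\<^sub>m r k) (transpose_mat A) (0\<^sub>m d k))
       (four_block_mat (0\<^sub>m r r) CR (transpose_mat CR) (x \<cdot>\<^sub>m 1\<^sub>m d)))"

lemma Mc_entry:
  assumes dims: "dim_row A = n" "dim_col A = d" "dim_row B = n" "dim_col B = dB" "dim_row C = nC" "dim_col C = d"
      "dim_row BS = n" "dim_col BS = k" "dim_row CR = r" "dim_col CR = d"
  and BSi: "\<And>i a. i < n \<Longrightarrow> a < k \<Longrightarrow> BS $$ (i, a) = B $$ (i, pick S a)"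
  and CRi: "\<And>a j. a < r \<Longrightarrow> j < d \<Longrightarrow> CR $$ (a, j) = C $$ (pick R a, j)"
  and ri: "(i = a \<and> a < n \<and> gi = a) \<or> (i = n + a \<and> a < k \<and> gi = n+nC+pick S a \<and> pick S a < dB)
     \<or> (i = n+k+a \<and> a < r \<and> gi = n + pick R a \<and> pick R a < nC) \<or> (i = n+k+r+a \<and> a < d \<and> gi = n+nC+dB+a)"
  and rj: "(j = b \<and> b < n \<and> gj = b) \<or> (j = n + b \<and> b < k \<and> gj = n+nC+pick S b \<and> pick S b < dB)
     \<or> (j = n+k+b \<and> b < r \<and> gj = n + pick R b \<and> pick R b < nC) \<or> (j = n+k+r+b \<and> b < d \<and> gj = n+nC+dB+b)"
  shows "Hmat x w (\<lambda>_. 0) (\<lambda>_. 0) A B C $$ (gi, gj) = Mc x w A BS CR $$ (i,j)"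
  using ri rj unfolding Hmat_def Mc_def Let_def dims
  by (elim disjE conjE; simp add: mat_diag_def BSi CRi dims)

lemma compress_H:
  assumes A: "A \<in> carrier_mat n d" and B: "B \<in> carrier_mat n dB" and C: "C \<in> carrier_mat nC d"
    and S: "S \<subseteq> {0..<dB}" and R: "R \<subseteq> {0..<nC}" and k: "card S = k" and r: "card R = r"
  shows "det (uset (Hmat x w (\<lambda>_. 0) (\<lambda>_. 0) A B C)
              ((\<lambda>i. n+nC+i) ` ({0..<dB} - S) \<union> (\<lambda>j. n+j) ` ({0..<nC} - R)))
         = det (Mc x w A (cols_sub B S) (rows_sub C R))"
proof -
  define U where "U = (\<lambda>i. n+nC+i) ` ({0..<dB} - S) \<union> (\<lambda>j. n+j) ` ({0..<nC} - R)"
  define m where "m = n+nC+dB+d"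
  define t where "t = n+k+r+d"
  define g where "g i = (if i < n then i else if i < n+k then n+nC+pick S (i-n)
     else if i < n+k+r then n + pick R (i-n-k) else i - (n+k+r) + (n+nC+dB))" for i
  have fS: "finite S" and fR: "finite R" using S R finite_subset by auto
  have pS: "pick S a \<in> S" "pick S a < dB" if "a < k" for a using pick_in_set_le[of a S] that k S by auto
  have pR: "pick R a \<in> R" "pick R a < nC" if "a < r" for a using pick_in_set_le[of a R] that r R by auto
  have U: "U \<subseteq> {0..<m}" unfolding U_def m_def by auto
  define ginv where "ginv q = (if q < n then q else if q < n+nC then n+k+card {a\<in>R. a < q-n}
     else if q < n+nC+dB then n + card {a\<in>S. a < q-n-nC} else q - (n+nC+dB) + (n+k+r))" for q
  have ginv: "ginv (g i) = i" if i: "i < t" for i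
  proof -
    have ri: "i < n \<or> (n \<le> i \<and> i < n+k) \<or> (n+k \<le> i \<and> i < n+k+r) \<or> (n+k+r \<le> i \<and> i < t)"
      using i by auto
    then show ?thesis
    proof (elim disjE conjE)
      assume "i < n" then show ?thesis unfolding g_def ginv_def by auto
    next
      assume a: "n \<le> i" "i < n+k"
      then have b: "i - n < k" by auto
      have "card {a\<in>S. a < pick S (i-n)} = i - n" using card_pick_le[of "i-n" S] b k by auto
      then show ?thesis using a pS[OF b] unfolding g_def ginv_def by auto
    next
      assume a: "n+k \<le> i" "i < n+k+r"
      then have b: "i - n - k < r" by auto
      have "card {a\<in>R. a < pick R (i-n-k)} = i - n - k" using card_pick_le[of "i-n-k" R] b r by auto
      then show ?thesis using a pR[OF b] unfolding g_def ginv_def by auto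
    next
      assume a: "n+k+r \<le> i" "i < t"
      then show ?thesis unfolding g_def ginv_def by auto
    qed
  qed
  have ginj: "inj_on g {0..<t}"
    by (rule inj_on_inverseI[of _ ginv]) (auto simp: ginv)
  have gim: "g ` {0..<t} = {0..<m} - U"
  proof
    show "g ` {0..<t} \<subseteq> {0..<m} - U"
    proof
      fix q assume "q \<in> g ` {0..<t}"
      then obtain i where i: "i < t" and q: "q = g i" by auto
      have ri: "i < n \<or> (n \<le> i \<and> i < n+k) \<or> (n+k \<le> i \<and> i < n+k+r) \<or> (n+k+r \<le> i \<and> i < t)"
        using i by auto
      then show "q \<in> {0..<m} - U"
      proof (elim disjE conjE)
        assume "i < n" then show ?thesis unfolding q g_def U_def m_def by auto
      next
        assume a: "n \<le> i" "i < n+k"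
        then have b: "i - n < k" by auto
        show ?thesis using a pS[OF b] unfolding q g_def U_def m_def by auto
      next
        assume a: "n+k \<le> i" "i < n+k+r"
        then have b: "i - n - k < r" by auto
        show ?thesis using a pR[OF b] unfolding q g_def U_def m_def by auto
      next
        assume a: "n+k+r \<le> i" "i < t"
        then show ?thesis unfolding q g_def U_def m_def t_def by auto
      qed
    qed
  next
    show "{0..<m} - U \<subseteq> g ` {0..<t}"
    proof
      fix q assume q: "q \<in> {0..<m} - U"
      have rq: "q < n \<or> (n \<le> q \<and> q < n+nC) \<or> (n+nC \<le> q \<and> q < n+nC+dB) \<or> (n+nC+dB \<le> q \<and> q < m)"
        using q unfolding m_def by auto
      then show "q \<in> g ` {0..<t}"
      proof (elim disjE conjE)
        assume "q < n" then show ?thesis unfolding g_def t_def by (intro image_eqI[of _ _ q]) auto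
      next
        assume a: "n \<le> q" "q < n + nC"
        then have "q - n \<in> R" using q unfolding U_def by force
        then obtain b where b: "b < r" "pick R b = q - n" using pick_surj[OF fR] r by blast
        show ?thesis unfolding g_def t_def using a b by (intro image_eqI[of _ _ "n+k+b"]) auto
      next
        assume a: "n + nC \<le> q" "q < n + nC + dB"
        then have "q - n - nC \<in> S" using q unfolding U_def by force
        then obtain b where b: "b < k" "pick S b = q - n - nC" using pick_surj[OF fS] k by blast
        show ?thesis unfolding g_def t_def using a b by (intro image_eqI[of _ _ "n+b"]) auto
      next
        assume a: "n + nC + dB \<le> q" "q < m"
        show ?thesis unfolding g_def t_def using a unfolding m_def by (intro image_eqI[of _ _ "q - (n+nC+dB) + (n+k+r)"]) auto
      qed
    qed
  qed
  have H0: "Hmat x w (\<lambda>_. 0) (\<lambda>_. 0) A B C \<in> carrier_mat m m" unfolding m_def by (rule Hmat_carrier[OF A B C])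
  have "det (uset (Hmat x w (\<lambda>_. 0) (\<lambda>_. 0) A B C) U) =
        det (mat t t (\<lambda>(i,j). Hmat x w (\<lambda>_. 0) (\<lambda>_. 0) A B C $$ (g i, g j)))"
    by (rule det_uset_compress[OF H0 U ginj gim])
  also have "mat t t (\<lambda>(i,j). Hmat x w (\<lambda>_. 0) (\<lambda>_. 0) A B C $$ (g i, g j)) = Mc x w A (cols_sub B S) (rows_sub C R)"
  proof -
    have BS: "cols_sub B S \<in> carrier_mat n k" using cols_sub_carrier[OF B S] k by simp
    have CR: "rows_sub C R \<in> carrier_mat r d" using rows_sub_carrier[OF C R] r by simp
    have dims: "dim_row A = n" "dim_col A = d" "dim_row B = n" "dim_col B = dB" "dim_row C = nC" "dim_col C = d"
      "dim_row (cols_sub B S) = n" "dim_col (cols_sub B S) = k" "dim_row (rows_sub C R) = r" "dim_col (rows_sub C R) = d"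
      using A B C BS CR by auto
    have BSi: "cols_sub B S $$ (i, a) = B $$ (i, pick S a)" if "i < n" "a < k" for i a
      using cols_sub_index[OF B S] that k by simp
    have CRi: "rows_sub C R $$ (a, j) = C $$ (pick R a, j)" if "a < r" "j < d" for a j
      using rows_sub_index[OF C R] that r by simp
    have reg: "\<exists>a. (i = a \<and> a < n \<and> g i = a) \<or> (i = n + a \<and> a < k \<and> g i = n+nC+pick S a \<and> pick S a < dB)
     \<or> (i = n+k+a \<and> a < r \<and> g i = n + pick R a \<and> pick R a < nC) \<or> (i = n+k+r+a \<and> a < d \<and> g i = n+nC+dB+a)" if "i < t" for i
    proof -
      consider "i < n" | "n \<le> i" "i < n+k" | "n+k \<le> i" "i < n+k+r" | "n+k+r \<le> i" using that by arith
      then show ?thesis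
      proof cases
        case 1 then show ?thesis unfolding g_def by auto
      next
        case 2 then have "i - n < k" by arith
        then show ?thesis using 2 pS[of "i-n"] unfolding g_def by (intro exI[of _ "i-n"]) auto
      next
        case 3 then have "i - n - k < r" by arith
        then show ?thesis using 3 pR[of "i-n-k"] unfolding g_def by (intro exI[of _ "i-n-k"]) auto
      next
        case 4 then show ?thesis using that unfolding g_def t_def by (intro exI[of _ "i-(n+k+r)"]) auto
      qed
    qed
    show ?thesis
    proof (rule eq_matI)
      show "dim_row (mat t t (\<lambda>(i,j). Hmat x w (\<lambda>_. 0) (\<lambda>_. 0) A B C $$ (g i, g j))) = dim_row (Mc x w A (cols_sub B S) (rows_sub C R))"
        unfolding Mc_def Let_def dims t_def by simp
      show "dim_col (mat t t (\<lambda>(i,j). Hmat x w (\<lambda>_. 0) (\<lambda>_. 0) A B C $$ (g i, g j))) = dim_col (Mc x w A (cols_sub B S) (rows_sub C R))"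
        unfolding Mc_def Let_def dims t_def by simp
      fix i j assume "i < dim_row (Mc x w A (cols_sub B S) (rows_sub C R))" "j < dim_col (Mc x w A (cols_sub B S) (rows_sub C R))"
      then have i: "i < t" and j: "j < t" unfolding Mc_def Let_def dims t_def by auto
      have "Hmat x w (\<lambda>_. 0) (\<lambda>_. 0) A B C $$ (g i, g j) = Mc x w A (cols_sub B S) (rows_sub C R) $$ (i,j)"
        using reg[OF i] reg[OF j] by (elim exE) (rule Mc_entry[OF dims BSi CRi], auto)
      then show "mat t t (\<lambda>(i,j). Hmat x w (\<lambda>_. 0) (\<lambda>_. 0) A B C $$ (g i, g j)) $$ (i,j) = Mc x w A (cols_sub B S) (rows_sub C R) $$ (i,j)"
        using i j by simp
    qed
  qed
  finally show ?thesis unfolding U_def .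
qed



lemma schur:
  fixes A :: "real mat"
  assumes A: "A \<in> carrier_mat n n" and B: "B \<in> carrier_mat n m" and C: "C \<in> carrier_mat m n"
    and D: "D \<in> carrier_mat m m" and Ai: "Ai \<in> carrier_mat n n" and inv: "Ai * A = 1\<^sub>m n"
  shows "det (four_block_mat A B C D) = det A * det (D - C * Ai * B)"
proof -
  let ?S = "D - C * Ai * B"
  have S: "?S \<in> carrier_mat m m" using A B C D Ai by auto
  let ?L = "four_block_mat (1\<^sub>m n) (0\<^sub>m n m) (C * Ai) (1\<^sub>m m)"
  let ?R = "four_block_mat A B (0\<^sub>m m n) ?S"
  have CAi: "C * Ai \<in> carrier_mat m n" using C Ai by auto
  have "?L * ?R = four_block_mat (1\<^sub>m n * A + 0\<^sub>m n m * 0\<^sub>m m n) (1\<^sub>m n * B + 0\<^sub>m n m * ?S)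
      (C * Ai * A + 1\<^sub>m m * 0\<^sub>m m n) (C * Ai * B + 1\<^sub>m m * ?S)"
    by (rule mult_four_block_mat[OF one_carrier_mat zero_carrier_mat CAi one_carrier_mat A B zero_carrier_mat S])
  also have "\<dots> = four_block_mat A B C D"
  proof -
    have e1: "1\<^sub>m n * A + 0\<^sub>m n m * 0\<^sub>m m n = A" using A by simp
    have e2: "1\<^sub>m n * B + 0\<^sub>m n m * ?S = B" using B S by (simp add: left_mult_zero_mat[OF S])
    have "C * Ai * A = C * (Ai * A)" using C Ai A by simp
    then have e3: "C * Ai * A + 1\<^sub>m m * 0\<^sub>m m n = C" using C inv by simp
    have e4: "C * Ai * B + 1\<^sub>m m * ?S = D"
      using A B C D Ai S by (intro eq_matI) auto
    show ?thesis unfolding e1 e2 e3 e4 ..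
  qed
  finally have eq: "four_block_mat A B C D = ?L * ?R" ..
  have "det (?L * ?R) = det ?L * det ?R"
    by (rule det_mult[of _ "n+m"]) (use A B S CAi in auto)
  moreover have "det ?L = 1"
    by (subst det_four_block_mat_upper_right_zero[of _ n _ m]) (use CAi in auto)
  moreover have "det ?R = det A * det ?S"
    by (rule det_four_block_mat_lower_left_zero[OF A B refl S])
  ultimately show ?thesis unfolding eq by simp
qed

lemma inv_exists:
  fixes G :: "real mat"
  assumes G: "G \<in> carrier_mat k k" and d: "det G \<noteq> 0"
  obtains Gi where "Gi \<in> carrier_mat k k" "G * Gi = 1\<^sub>m k" "Gi * G = 1\<^sub>m k"
proof -
  define Gi where "Gi = (1 / det G) \<cdot>\<^sub>m adj_mat G"
  have Gi: "Gi \<in> carrier_mat k k" unfolding Gi_def using adj_mat(1)[OF G] by simp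
  have "G * Gi = (1 / det G) \<cdot>\<^sub>m (G * adj_mat G)" unfolding Gi_def
    using mult_smult_distrib[OF G adj_mat(1)[OF G]] .
  also have "\<dots> = 1\<^sub>m k" unfolding adj_mat(2)[OF G] using d by (intro eq_matI) auto
  finally have 1: "G * Gi = 1\<^sub>m k" .
  have "Gi * G = (1 / det G) \<cdot>\<^sub>m (adj_mat G * G)" unfolding Gi_def
    using mult_smult_assoc_mat[OF adj_mat(1)[OF G] G] .
  also have "\<dots> = 1\<^sub>m k" unfolding adj_mat(3)[OF G] using d by (intro eq_matI) auto
  finally have 2: "Gi * G = 1\<^sub>m k" .
  show ?thesis using that Gi 1 2 by blast
qed

lemma inv_sym:
  fixes G :: "real mat"
  assumes G: "G \<in> carrier_mat k k" and Gi: "Gi \<in> carrier_mat k k" and sym: "transpose_mat G = G"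
    and i1: "G * Gi = 1\<^sub>m k"
  shows "transpose_mat Gi = Gi"
proof -
  have GiT: "transpose_mat Gi \<in> carrier_mat k k" using Gi by simp
  have "transpose_mat Gi = transpose_mat Gi * (G * Gi)" using i1 GiT by simp
  also have "\<dots> = (transpose_mat Gi * G) * Gi" using GiT G Gi by simp
  also have "transpose_mat Gi * G = transpose_mat (G * Gi)"
    using transpose_mult[OF G Gi] sym by simp
  also have "\<dots> = 1\<^sub>m k" using i1 by simp
  finally show ?thesis using Gi by simp
qed

lemma massoc: "dim_col A = dim_row B \<Longrightarrow> dim_col B = dim_row C \<Longrightarrow> A * B * C = A * (B * (C :: real mat))"
  by (rule assoc_mult_mat[OF carrier_matI[OF refl refl] carrier_matI[OF _ refl] carrier_matI[OF _ refl]]) simp_all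

lemma mtrans: "dim_col A = dim_row B \<Longrightarrow> transpose_mat (A * B) = transpose_mat B * transpose_mat (A :: real mat)"
  by (rule transpose_mult[OF carrier_matI[OF refl refl] carrier_matI[OF _ refl]]) simp

lemma mdistl_add: "dim_col A = dim_row B \<Longrightarrow> dim_row B = dim_row C \<Longrightarrow> dim_col B = dim_col C \<Longrightarrow>
  A * (B + C) = A * B + A * (C :: real mat)"
  by (rule mult_add_distrib_mat[OF carrier_matI[OF refl refl] carrier_matI[OF _ refl] carrier_matI]) simp_all

lemma mdistr_add: "dim_row A = dim_row B \<Longrightarrow> dim_col A = dim_col B \<Longrightarrow> dim_col A = dim_row C \<Longrightarrow>
  (A + B) * C = A * C + B * (C :: real mat)"
  by (rule add_mult_distrib_mat[OF carrier_matI[OF refl refl] carrier_matI carrier_matI[OF _ refl]]) simp_all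

lemma mdistl_minus: "dim_col A = dim_row B \<Longrightarrow> dim_row B = dim_row C \<Longrightarrow> dim_col B = dim_col C \<Longrightarrow>
  A * (B - C) = A * B - A * (C :: real mat)"
  by (rule mult_minus_distrib_mat[OF carrier_matI[OF refl refl] carrier_matI[OF _ refl] carrier_matI]) simp_all

lemma mdistr_minus: "dim_row A = dim_row B \<Longrightarrow> dim_col A = dim_col B \<Longrightarrow> dim_col A = dim_row C \<Longrightarrow>
  (A - B) * C = A * C - B * (C :: real mat)"
  by (rule minus_mult_distrib_mat[OF carrier_matI[OF refl refl] carrier_matI carrier_matI[OF _ refl]]) simp_all

lemma msmult_l: "dim_col A = dim_row B \<Longrightarrow> (c \<cdot>\<^sub>m A) * B = c \<cdot>\<^sub>m (A * (B :: real mat))"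
  by (rule mult_smult_assoc_mat[OF carrier_matI[OF refl refl] carrier_matI[OF _ refl]]) simp

lemma msmult_r: "dim_col A = dim_row B \<Longrightarrow> A * (c \<cdot>\<^sub>m B) = c \<cdot>\<^sub>m (A * (B :: real mat))"
  by (rule mult_smult_distrib[OF carrier_matI[OF refl refl] carrier_matI[OF _ refl]]) simp

lemmas malg = massoc mtrans mdistl_add mdistr_add mdistl_minus mdistr_minus msmult_l msmult_r

definition MPc :: "real mat \<Rightarrow> real mat \<Rightarrow> bool" where
  "MPc M X = (X \<in> carrier_mat (dim_col M) (dim_row M) \<and>
                    M * X * M = M \<and> X * M * X = X \<and>
                    transpose_mat (M * X) = M * X \<and> transpose_mat (X * M) = X * M)"

lemma MP_unique:
  assumes M: "M \<in> carrier_mat a b" and X: "MPc M X" and Y: "MPc M Y"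
  shows "X = Y"
proof -
  have d: "dim_row M = a" "dim_col M = b" "dim_row X = b" "dim_col X = a" "dim_row Y = b" "dim_col Y = a"
    using X Y M unfolding MPc_def by auto
  have x1: "M * X * M = M" "X * M * X = X" "transpose_mat (M * X) = M * X" "transpose_mat (X * M) = X * M"
    using X unfolding MPc_def by auto
  have y1: "M * Y * M = M" "Y * M * Y = Y" "transpose_mat (M * Y) = M * Y" "transpose_mat (Y * M) = Y * M"
    using Y unfolding MPc_def by auto
  have x2: "M * (X * M) = M" "X * (M * X) = X" "transpose_mat X * transpose_mat M = M * X" "transpose_mat M * transpose_mat X = X * M"
    using x1 d by (simp_all add: malg)
  have y2: "M * (Y * M) = M" "Y * (M * Y) = Y" "transpose_mat Y * transpose_mat M = M * Y" "transpose_mat M * transpose_mat Y = Y * M"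
    using y1 d by (simp_all add: malg)
  have tM1: "transpose_mat M = transpose_mat M * (transpose_mat Y * transpose_mat M)"
    using arg_cong[OF y2(1), of transpose_mat] d by (simp add: malg)
  have tM2: "transpose_mat M = transpose_mat M * (transpose_mat X * transpose_mat M)"
    using arg_cong[OF x2(1), of transpose_mat] d by (simp add: malg)
  have "X = X * (transpose_mat X * transpose_mat M)" using x2 by simp
  also have "\<dots> = X * (transpose_mat X * (transpose_mat M * (transpose_mat Y * transpose_mat M)))"
    by (subst tM1[symmetric]) (rule refl)
  also have "\<dots> = X * ((transpose_mat X * transpose_mat M) * (transpose_mat Y * transpose_mat M))"
    using d by (simp add: malg)
  also have "\<dots> = X * ((M * X) * (M * Y))" using x2 y2 by simp
  also have "\<dots> = (X * (M * X)) * (M * Y)" using d by (simp add: malg)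
  also have "\<dots> = X * (M * Y)" using x2 by simp
  finally have X1: "X = X * (M * Y)" .
  have "Y = (transpose_mat M * transpose_mat Y) * Y" using y2 d by (simp add: malg)
  also have "\<dots> = ((transpose_mat M * (transpose_mat X * transpose_mat M)) * transpose_mat Y) * Y"
    by (subst tM2[symmetric]) (rule refl)
  also have "\<dots> = ((transpose_mat M * transpose_mat X) * (transpose_mat M * transpose_mat Y)) * Y"
    using d by (simp add: malg)
  also have "\<dots> = ((X * M) * (Y * M)) * Y" using x2 y2 by simp
  also have "\<dots> = X * (M * (Y * (M * Y)))" using d by (simp add: malg)
  also have "\<dots> = X * (M * Y)" using y2 by simp
  finally have Y1: "Y = X * (M * Y)" .
  show ?thesis using X1 Y1 by simp
qed

lemma pinv_eq:
  assumes M: "M \<in> carrier_mat a b" and X: "MPc M X"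
  shows "pinv M = X"
proof -
  have "pinv M = (THE X. MPc M X)" unfolding pinv_def MPc_def ..
  also have "\<dots> = X" using MP_unique[OF M] X by (intro the_equality) auto
  finally show ?thesis .
qed


lemma gram_kernel:
  fixes M :: "real mat"
  assumes M: "M \<in> carrier_mat a b" and v: "v \<in> carrier_vec b"
    and z: "(transpose_mat M * M) *\<^sub>v v = 0\<^sub>v b"
  shows "M *\<^sub>v v = 0\<^sub>v a"
proof -
  define u where "u = M *\<^sub>v v"
  have u: "u \<in> carrier_vec a" unfolding u_def by (rule mult_mat_vec_carrier[OF M v])
  have ui: "u $ i = (\<Sum>j<b. M $$ (i,j) * v $ j)" if "i < a" for i
    unfolding u_def using M v that by (simp add: scalar_prod_def row_def lessThan_atLeast0)
  have "0 = v \<bullet> ((transpose_mat M * M) *\<^sub>v v)" using z v by simp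
  also have "(transpose_mat M * M) *\<^sub>v v = transpose_mat M *\<^sub>v u" unfolding u_def using M v by simp
  also have "v \<bullet> (transpose_mat M *\<^sub>v u) = (\<Sum>j<b. v $ j * (\<Sum>i<a. M $$ (i,j) * u $ i))"
    using M v u by (simp add: scalar_prod_def row_def col_def lessThan_atLeast0)
  also have "\<dots> = (\<Sum>i<a. (\<Sum>j<b. M $$ (i,j) * v $ j) * u $ i)"
    by (simp add: sum_distrib_left sum_distrib_right sum.swap[of _ "{..<b}"] algebra_simps)
  also have "\<dots> = (\<Sum>i<a. u $ i * u $ i)" using ui by simp
  finally have s0: "(\<Sum>i<a. u $ i * u $ i) = 0" by simp
  have "\<forall>i\<in>{..<a}. u $ i * u $ i = 0"
    using s0 by (subst sum_nonneg_eq_0_iff[symmetric]) auto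
  then have "u = 0\<^sub>v a" using u by (intro eq_vecI) auto
  then show ?thesis unfolding u_def .
qed

lemma mv0[simp]: "dim_col A = c \<Longrightarrow> dim_row A = rr \<Longrightarrow> A *\<^sub>v 0\<^sub>v c = (0\<^sub>v rr :: real vec)"
  by (intro eq_vecI) (auto simp: scalar_prod_def)

lemma zmv[simp]: "dim_vec v = b \<Longrightarrow> 0\<^sub>m a b *\<^sub>v v = (0\<^sub>v a :: real vec)"
  by (intro eq_vecI) (auto simp: scalar_prod_def)

lemma app0[simp]: "0\<^sub>v a @\<^sub>v 0\<^sub>v b = (0\<^sub>v (a+b) :: real vec)"
  by (intro eq_vecI) auto

lemma add0v[simp]: "0\<^sub>v a + 0\<^sub>v a = (0\<^sub>v a :: real vec)"
  by (intro eq_vecI) auto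

lemma Mc_carrier:
  assumes A: "A \<in> carrier_mat n d" and BS: "BS \<in> carrier_mat n k" and CR: "CR \<in> carrier_mat r d"
  shows "Mc x w A BS CR \<in> carrier_mat (n+k+(r+d)) (n+k+(r+d))"
  using assms unfolding Mc_def Let_def by auto

lemma Mc_degen_B:
  fixes A BS CR :: "real mat"
  assumes A: "A \<in> carrier_mat n d" and BS: "BS \<in> carrier_mat n k" and CR: "CR \<in> carrier_mat r d"
    and dG: "det (transpose_mat BS * BS) = 0"
  shows "det (Mc x w A BS CR) = 0"
proof -
  have G: "transpose_mat BS * BS \<in> carrier_mat k k" using BS by auto
  obtain v where v: "v \<in> carrier_vec k" "v \<noteq> 0\<^sub>v k" "(transpose_mat BS * BS) *\<^sub>v v = 0\<^sub>v k"
    using dG det_0_iff_vec_prod_zero[OF G] by auto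
  have BSv: "BS *\<^sub>v v = 0\<^sub>v n" by (rule gram_kernel[OF BS v(1) v(3)])
  define z where "z = (0\<^sub>v n @\<^sub>v v) @\<^sub>v 0\<^sub>v (r+d)"
  have z: "z \<in> carrier_vec (n+k+(r+d))" unfolding z_def using v by auto
  have dims: "dim_row A = n" "dim_col A = d" "dim_row BS = n" "dim_col BS = k" "dim_row CR = r" "dim_col CR = d"
    using A BS CR by auto
  have T: "four_block_mat (w \<cdot>\<^sub>m 1\<^sub>m n) BS (transpose_mat BS) (0\<^sub>m k k) *\<^sub>v (0\<^sub>v n @\<^sub>v v) = 0\<^sub>v (n+k)"
    by (subst four_block_mat_mult_vec[of _ n n _ k _ k]) (use A BS v BSv dims in \<open>auto\<close>)
  have Et: "four_block_mat (0\<^sub>m r n) (0\<^sub>m r k) (transpose_mat A) (0\<^sub>m d k) *\<^sub>v (0\<^sub>v n @\<^sub>v v) = 0\<^sub>v (r+d)"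
    by (subst four_block_mat_mult_vec[of _ r n _ k _ d]) (use A BS v dims in \<open>auto\<close>)
  have "Mc x w A BS CR *\<^sub>v z = 0\<^sub>v (n+k+(r+d))"
    unfolding Mc_def Let_def dims z_def
    by (subst four_block_mat_mult_vec[of _ "n+k" "n+k" _ "r+d" _ "r+d"]) (use A BS CR v T Et dims in \<open>auto\<close>)
  moreover have "z \<noteq> 0\<^sub>v (n+k+(r+d))"
  proof
    assume "z = 0\<^sub>v (n+k+(r+d))"
    then have "z $ (n+i) = 0" if "i < k" for i using that by simp
    then have "v $ i = 0" if "i < k" for i using that v(1) unfolding z_def by auto
    then have "v = 0\<^sub>v k" using v(1) by (intro eq_vecI) auto
    with v(2) show False by simp
  qed
  ultimately show ?thesis using det_0_iff_vec_prod_zero[OF Mc_carrier[OF A BS CR]] z by blast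
qed

lemma Mc_degen_C:
  fixes A BS CR :: "real mat"
  assumes A: "A \<in> carrier_mat n d" and BS: "BS \<in> carrier_mat n k" and CR: "CR \<in> carrier_mat r d"
    and dG: "det (CR * transpose_mat CR) = 0"
  shows "det (Mc x w A BS CR) = 0"
proof -
  have CRT: "transpose_mat CR \<in> carrier_mat d r" using CR by auto
  have G: "transpose_mat (transpose_mat CR) * transpose_mat CR \<in> carrier_mat r r" using CR by auto
  obtain v where v: "v \<in> carrier_vec r" "v \<noteq> 0\<^sub>v r" "(transpose_mat (transpose_mat CR) * transpose_mat CR) *\<^sub>v v = 0\<^sub>v r"
    using dG det_0_iff_vec_prod_zero[OF G] by auto
  have CRv: "transpose_mat CR *\<^sub>v v = 0\<^sub>v d" by (rule gram_kernel[OF CRT v(1) v(3)])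
  define z where "z = 0\<^sub>v (n+k) @\<^sub>v (v @\<^sub>v 0\<^sub>v d)"
  have z: "z \<in> carrier_vec (n+k+(r+d))" unfolding z_def using v by auto
  have dims: "dim_row A = n" "dim_col A = d" "dim_row BS = n" "dim_col BS = k" "dim_row CR = r" "dim_col CR = d"
    using A BS CR by auto
  have E: "four_block_mat (0\<^sub>m n r) A (0\<^sub>m k r) (0\<^sub>m k d) *\<^sub>v (v @\<^sub>v 0\<^sub>v d) = 0\<^sub>v (n+k)"
    by (subst four_block_mat_mult_vec[of _ n r _ d _ k]) (use A BS v dims in \<open>auto\<close>)
  have D2: "four_block_mat (0\<^sub>m r r) CR (transpose_mat CR) (x \<cdot>\<^sub>m 1\<^sub>m d) *\<^sub>v (v @\<^sub>v 0\<^sub>v d) = 0\<^sub>v (r+d)"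
    by (subst four_block_mat_mult_vec[of _ r r _ d _ d]) (use CR v CRv dims in \<open>auto\<close>)
  have "Mc x w A BS CR *\<^sub>v z = 0\<^sub>v (n+k+(r+d))"
    unfolding Mc_def Let_def dims z_def
    by (subst four_block_mat_mult_vec[of _ "n+k" "n+k" _ "r+d" _ "r+d"]) (use A BS CR v E D2 dims in \<open>auto\<close>)
  moreover have "z \<noteq> 0\<^sub>v (n+k+(r+d))"
  proof
    assume "z = 0\<^sub>v (n+k+(r+d))"
    then have "z $ (n+k+i) = 0" if "i < r" for i using that by simp
    then have "v $ i = 0" if "i < r" for i using that v(1) unfolding z_def by auto
    then have "v = 0\<^sub>v r" using v(1) by (intro eq_vecI) auto
    with v(2) show False by simp
  qed
  ultimately show ?thesis using det_0_iff_vec_prod_zero[OF Mc_carrier[OF A BS CR]] z by blast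
qed


lemma mminus0[simp]: "dim_row A = a \<Longrightarrow> dim_col A = b \<Longrightarrow> A - 0\<^sub>m a b = (A :: real mat)"
  by (intro eq_matI) auto
lemma madd0r[simp]: "dim_row A = a \<Longrightarrow> dim_col A = b \<Longrightarrow> A + 0\<^sub>m a b = (A :: real mat)"
  by (intro eq_matI) auto
lemma madd0l[simp]: "dim_row A = a \<Longrightarrow> dim_col A = b \<Longrightarrow> 0\<^sub>m a b + A = (A :: real mat)"
  by (intro eq_matI) auto

lemma muminus0[simp]: "- 0\<^sub>m a b = (0\<^sub>m a b :: real mat)"
  by (intro eq_matI) auto

lemma step3:
  fixes C K Gci :: "real mat"
  assumes C: "C \<in> carrier_mat r d" and K: "K \<in> carrier_mat d d" and w: "w \<noteq> 0"
    and Gci: "Gci \<in> carrier_mat r r" and i1: "(C * transpose_mat C) * Gci = 1\<^sub>m r"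
    and i2: "Gci * (C * transpose_mat C) = 1\<^sub>m r"
  shows "det (C * transpose_mat C) * det ((x*w) \<cdot>\<^sub>m 1\<^sub>m d - (1\<^sub>m d - transpose_mat C * (Gci * C)) * (K * (1\<^sub>m d - transpose_mat C * (Gci * C))))
       = (-x)^r * w^d * det (four_block_mat (0\<^sub>m r r) C (transpose_mat C) (x \<cdot>\<^sub>m 1\<^sub>m d - (1/w) \<cdot>\<^sub>m K))"
proof -
  define Ct where "Ct = transpose_mat C"
  have Ct: "Ct \<in> carrier_mat d r" unfolding Ct_def using C by simp
  define Hc where "Hc = Ct * (Gci * C)"
  define P where "P = 1\<^sub>m d - Hc"
  define Y where "Y = x \<cdot>\<^sub>m 1\<^sub>m d - (1/w) \<cdot>\<^sub>m K"
  have Hc: "Hc \<in> carrier_mat d d" unfolding Hc_def using Ct Gci C by auto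
  have P: "P \<in> carrier_mat d d" unfolding P_def using Hc by auto
  have Y: "Y \<in> carrier_mat d d" unfolding Y_def using K by auto
  have dims: "dim_row C = r" "dim_col C = d" "dim_row Ct = d" "dim_col Ct = r" "dim_row Gci = r" "dim_col Gci = r"
    "dim_row Hc = d" "dim_col Hc = d" "dim_row P = d" "dim_col P = d" "dim_row Y = d" "dim_col Y = d"
    "dim_row K = d" "dim_col K = d"
    using C Ct Gci Hc P Y K by auto
  have a1: "C * (Ct * Gci) = 1\<^sub>m r" using i1 dims unfolding Ct_def by (simp add: malg)
  have a2: "Gci * (C * Ct) = 1\<^sub>m r" using i2 dims unfolding Ct_def by (simp add: malg)
  have PCt: "P * Ct = 0\<^sub>m d r"
  proof -
    have "P * Ct = Ct - Ct * (Gci * (C * Ct))" unfolding P_def Hc_def using dims by (simp add: malg)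
    also have "\<dots> = 0\<^sub>m d r" unfolding a2 using Ct by simp
    finally show ?thesis .
  qed
  have CP: "C * P = 0\<^sub>m r d"
  proof -
    have "C * P = C - (C * (Ct * Gci)) * C" unfolding P_def Hc_def using dims by (simp add: malg)
    also have "\<dots> = 0\<^sub>m r d" unfolding a1 using C by simp
    finally show ?thesis .
  qed
  have PP: "P * P = P"
  proof -
    have "P * P = P - Ct * (Gci * (C * P))" unfolding P_def Hc_def using dims by (simp add: malg)
    also have "\<dots> = P" unfolding CP using P Ct Gci by simp
    finally show ?thesis .
  qed
  have PCtG: "P * (Ct * Gci) = 0\<^sub>m d r"
    using PCt dims by (simp add: massoc[symmetric])
  define N2 where "N2 = four_block_mat (0\<^sub>m r r) C Ct Y"
  define U where "U = four_block_mat (1\<^sub>m r) (-(Gci*(C*Y))) (0\<^sub>m d r) (1\<^sub>m d)"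
  define L where "L = four_block_mat (1\<^sub>m r) (0\<^sub>m r d) (-(P*(Y*(Ct*Gci)))) (1\<^sub>m d)"
  define X2 where "X2 = four_block_mat (0\<^sub>m r r) C Ct (P*(Y*P))"
  define W where "W = four_block_mat ((1-x) \<cdot>\<^sub>m Gci) (Gci*C) (Ct*Gci) (1\<^sub>m d)"
  have c0: "0\<^sub>m r r \<in> carrier_mat r r" "0\<^sub>m d r \<in> carrier_mat d r" "0\<^sub>m r d \<in> carrier_mat r d"
    "1\<^sub>m r \<in> carrier_mat r r" "1\<^sub>m d \<in> carrier_mat d d" by auto
  have cGCY: "-(Gci*(C*Y)) \<in> carrier_mat r d" using Gci C Y by auto
  have cPYCG: "-(P*(Y*(Ct*Gci))) \<in> carrier_mat d r" using Gci Ct Y P by auto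
  have cPY: "P * Y \<in> carrier_mat d d" using P Y by auto
  have cPYP: "P * (Y * P) \<in> carrier_mat d d" using P Y by auto
  have N2: "N2 \<in> carrier_mat (r+d) (r+d)" unfolding N2_def using C Ct Y by auto
  have U: "U \<in> carrier_mat (r+d) (r+d)" unfolding U_def by auto
  have L: "L \<in> carrier_mat (r+d) (r+d)" unfolding L_def by auto
  have X2: "X2 \<in> carrier_mat (r+d) (r+d)" unfolding X2_def using C Ct cPYP by auto
  have W: "W \<in> carrier_mat (r+d) (r+d)" unfolding W_def using Gci by auto
  have PY: "P * Y = Y - Ct * (Gci * (C * Y))" unfolding P_def Hc_def using dims by (simp add: malg)
  have NU: "N2 * U = four_block_mat (0\<^sub>m r r) C Ct (P * Y)"
  proof -
    have "N2 * U = four_block_mat (0\<^sub>m r r * 1\<^sub>m r + C * 0\<^sub>m d r) (0\<^sub>m r r * (-(Gci*(C*Y))) + C * 1\<^sub>m d)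
        (Ct * 1\<^sub>m r + Y * 0\<^sub>m d r) (Ct * (-(Gci*(C*Y))) + Y * 1\<^sub>m d)"
      unfolding N2_def U_def by (rule mult_four_block_mat[OF c0(1) C Ct Y c0(4) cGCY c0(2) c0(5)])
    also have "\<dots> = four_block_mat (0\<^sub>m r r) C Ct (P * Y)"
    proof -
      have "Ct * (-(Gci*(C*Y))) + Y * 1\<^sub>m d = P * Y" unfolding PY
        using Ct Gci C Y by (intro eq_matI) (simp_all del: index_mult_mat add: index_mult_mat(2,3))
      then show ?thesis using dims by simp
    qed
    finally show ?thesis .
  qed
  have YP: "Y * P = Y - Y * (Ct * (Gci * C))" unfolding P_def Hc_def using dims by (simp add: malg)
  have PYP: "P * (Y * P) = P * Y - P * (Y * (Ct * (Gci * C)))" unfolding YP using dims by (simp add: malg)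
  have LNU: "L * (N2 * U) = X2"
  proof -
    have "L * (N2 * U) = four_block_mat (1\<^sub>m r * 0\<^sub>m r r + 0\<^sub>m r d * Ct) (1\<^sub>m r * C + 0\<^sub>m r d * (P * Y))
        ((-(P*(Y*(Ct*Gci)))) * 0\<^sub>m r r + 1\<^sub>m d * Ct) ((-(P*(Y*(Ct*Gci)))) * C + 1\<^sub>m d * (P * Y))"
      unfolding NU L_def by (rule mult_four_block_mat[OF c0(4) c0(3) cPYCG c0(5) c0(1) C Ct cPY])
    also have "\<dots> = X2"
    proof -
      have e: "(-(P*(Y*(Ct*Gci)))) * C = -(P * (Y * (Ct * (Gci * C))))" using dims by (simp add: malg)
      have "(-(P*(Y*(Ct*Gci)))) * C + 1\<^sub>m d * (P * Y) = P * (Y * P)" unfolding e PYP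
        using Ct Gci C Y P by (intro eq_matI) (simp_all del: index_mult_mat add: index_mult_mat(2,3))
      then show ?thesis unfolding X2_def using dims Ct by simp
    qed
    finally show ?thesis .
  qed
  have dL: "det L = 1" unfolding L_def
    by (subst det_four_block_mat_upper_right_zero[of _ r _ d]) (use cPYCG in auto)
  have dU: "det U = 1" unfolding U_def
    by (subst det_four_block_mat_lower_left_zero[of _ r _ d]) (use cGCY in auto)
  have dX2: "det X2 = det N2"
  proof -
    have "det X2 = det L * (det N2 * det U)" unfolding LNU[symmetric]
      using det_mult[OF L mult_carrier_mat[OF N2 U]] det_mult[OF N2 U] by simp
    then show ?thesis using dL dU by simp
  qed
  have cCtG: "Ct * Gci \<in> carrier_mat d r" using Ct Gci by auto
  have cGC: "Gci * C \<in> carrier_mat r d" using Gci C by auto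
  have cxG: "(1-x) \<cdot>\<^sub>m Gci \<in> carrier_mat r r" using Gci by auto
  have XW: "X2 * W = four_block_mat (1\<^sub>m r) C ((1-x) \<cdot>\<^sub>m (Ct * Gci)) (Hc + P * (Y * P))"
  proof -
    have "X2 * W = four_block_mat (0\<^sub>m r r * ((1-x) \<cdot>\<^sub>m Gci) + C * (Ct * Gci)) (0\<^sub>m r r * (Gci * C) + C * 1\<^sub>m d)
       (Ct * ((1-x) \<cdot>\<^sub>m Gci) + P * (Y * P) * (Ct * Gci)) (Ct * (Gci * C) + P * (Y * P) * 1\<^sub>m d)"
      unfolding X2_def W_def by (rule mult_four_block_mat[OF c0(1) C Ct cPYP cxG cGC cCtG c0(5)])
    also have "\<dots> = four_block_mat (1\<^sub>m r) C ((1-x) \<cdot>\<^sub>m (Ct * Gci)) (Hc + P * (Y * P))"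
    proof -
      have e1: "P * (Y * P) * (Ct * Gci) = 0\<^sub>m d r"
      proof -
        have "P * (Y * P) * (Ct * Gci) = P * (Y * (P * (Ct * Gci)))" using dims by (simp add: malg)
        then show ?thesis unfolding PCtG using dims by simp
      qed
      have e2: "Ct * ((1-x) \<cdot>\<^sub>m Gci) = (1-x) \<cdot>\<^sub>m (Ct * Gci)" using dims by (simp add: malg)
      show ?thesis unfolding e1 e2 a1 Hc_def[symmetric] using dims Ct by simp
    qed
    finally show ?thesis .
  qed
  have cHPYP: "Hc + P * (Y * P) \<in> carrier_mat d d" using Hc cPYP by auto
  have cxCG: "(1-x) \<cdot>\<^sub>m (Ct * Gci) \<in> carrier_mat d r" using cCtG by auto
  have dXW: "det (X2 * W) = (1/w)^d * det ((x*w) \<cdot>\<^sub>m 1\<^sub>m d - P * (K * P))"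
  proof -
    have "det (X2 * W) = det (1\<^sub>m r) * det (Hc + P * (Y * P) - (1-x) \<cdot>\<^sub>m (Ct * Gci) * 1\<^sub>m r * C)"
      unfolding XW by (rule schur[OF c0(4) C cxCG cHPYP c0(4)]) simp
    also have "(1-x) \<cdot>\<^sub>m (Ct * Gci) * 1\<^sub>m r * C = (1-x) \<cdot>\<^sub>m Hc" unfolding Hc_def using dims by (simp add: malg)
    also have "P * (Y * P) = x \<cdot>\<^sub>m P - (1/w) \<cdot>\<^sub>m (P * (K * P))"
    proof -
      have "Y * P = x \<cdot>\<^sub>m P - (1/w) \<cdot>\<^sub>m (K * P)" unfolding Y_def using dims by (simp add: malg)
      then have "P * (Y * P) = x \<cdot>\<^sub>m (P * P) - (1/w) \<cdot>\<^sub>m (P * (K * P))" using dims by (simp add: malg)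
      then show ?thesis unfolding PP .
    qed
    also have "Hc + (x \<cdot>\<^sub>m P - (1/w) \<cdot>\<^sub>m (P * (K * P))) - (1-x) \<cdot>\<^sub>m Hc = (1/w) \<cdot>\<^sub>m ((x*w) \<cdot>\<^sub>m 1\<^sub>m d - P * (K * P))"
      unfolding P_def using Hc K w by (intro eq_matI) (simp_all del: index_mult_mat add: index_mult_mat(2,3) field_simps)
    finally show ?thesis using K dims by simp
  qed
  have dW: "det W = (-x)^r * det Gci"
  proof -
    have cxG2: "(-x) \<cdot>\<^sub>m Gci \<in> carrier_mat r r" using Gci by auto
    have "four_block_mat ((-x) \<cdot>\<^sub>m Gci) (Gci * C) (0\<^sub>m d r) (1\<^sub>m d) * four_block_mat (1\<^sub>m r) (0\<^sub>m r d) (Ct * Gci) (1\<^sub>m d)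
      = four_block_mat ((-x) \<cdot>\<^sub>m Gci * 1\<^sub>m r + Gci * C * (Ct * Gci)) ((-x) \<cdot>\<^sub>m Gci * 0\<^sub>m r d + Gci * C * 1\<^sub>m d)
         (0\<^sub>m d r * 1\<^sub>m r + 1\<^sub>m d * (Ct * Gci)) (0\<^sub>m d r * 0\<^sub>m r d + 1\<^sub>m d * 1\<^sub>m d)"
      by (rule mult_four_block_mat[OF cxG2 cGC c0(2) c0(5) c0(4) c0(3) cCtG c0(5)])
    also have "\<dots> = W"
    proof -
      have e: "Gci * C * (Ct * Gci) = Gci" using a1 dims by (simp add: malg)
      have "(-x) \<cdot>\<^sub>m Gci * 1\<^sub>m r + Gci * C * (Ct * Gci) = (1-x) \<cdot>\<^sub>m Gci" unfolding e
        using Gci by (intro eq_matI) (auto simp: algebra_simps)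
      then show ?thesis unfolding W_def using dims Gci cGC cCtG by simp
    qed
    finally have eW: "W = four_block_mat ((-x) \<cdot>\<^sub>m Gci) (Gci * C) (0\<^sub>m d r) (1\<^sub>m d) * four_block_mat (1\<^sub>m r) (0\<^sub>m r d) (Ct * Gci) (1\<^sub>m d)" ..
    have "det W = det (four_block_mat ((-x) \<cdot>\<^sub>m Gci) (Gci * C) (0\<^sub>m d r) (1\<^sub>m d)) * det (four_block_mat (1\<^sub>m r) (0\<^sub>m r d) (Ct * Gci) (1\<^sub>m d))"
      unfolding eW by (rule det_mult[of _ "r+d"]) (use cxG2 cGC cCtG in auto)
    also have "det (four_block_mat ((-x) \<cdot>\<^sub>m Gci) (Gci * C) (0\<^sub>m d r) (1\<^sub>m d)) = det ((-x) \<cdot>\<^sub>m Gci)"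
      by (subst det_four_block_mat_lower_left_zero[OF cxG2 cGC refl c0(5)]) simp
    also have "det (four_block_mat (1\<^sub>m r) (0\<^sub>m r d) (Ct * Gci) (1\<^sub>m d)) = 1"
      by (subst det_four_block_mat_upper_right_zero[OF c0(4) refl cCtG c0(5)]) simp
    finally show ?thesis using Gci by simp
  qed
  have dGG: "det (C * Ct) * det Gci = 1"
    using det_mult[OF mult_carrier_mat[OF C Ct] Gci] i1 unfolding Ct_def by simp
  have "det X2 * det W = (1/w)^d * det ((x*w) \<cdot>\<^sub>m 1\<^sub>m d - P * (K * P))"
    using det_mult[OF X2 W] dXW by simp
  then have E1: "det Gci * (det N2 * (-x)^r) = (1/w)^d * det ((x*w) \<cdot>\<^sub>m 1\<^sub>m d - P * (K * P))"
    unfolding dX2 dW by (simp add: algebra_simps)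
  have "det N2 * (-x)^r = (det (C * Ct) * det Gci) * (det N2 * (-x)^r)" using dGG by simp
  also have "\<dots> = det (C * Ct) * (det Gci * (det N2 * (-x)^r))" by (simp only: mult.assoc)
  also have "\<dots> = (1/w)^d * (det (C * Ct) * det ((x*w) \<cdot>\<^sub>m 1\<^sub>m d - P * (K * P)))" unfolding E1 by simp
  finally have "det N2 * (-x)^r = (1/w)^d * (det (C * Ct) * det ((x*w) \<cdot>\<^sub>m 1\<^sub>m d - P * (K * P)))" .
  then have "det (C * Ct) * det ((x*w) \<cdot>\<^sub>m 1\<^sub>m d - P * (K * P)) = w^d * (det N2 * (-x)^r)"
    using w by (simp add: field_simps power_divide)
  then show ?thesis unfolding N2_def Y_def P_def Hc_def Ct_def by (simp add: algebra_simps)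
qed


lemma step12:
  fixes A BS CR Gi :: "real mat"
  assumes A: "A \<in> carrier_mat n d" and BS: "BS \<in> carrier_mat n k" and CR: "CR \<in> carrier_mat r d"
    and w: "w \<noteq> 0" and Gi: "Gi \<in> carrier_mat k k"
    and i1: "(transpose_mat BS * BS) * Gi = 1\<^sub>m k" and i2: "Gi * (transpose_mat BS * BS) = 1\<^sub>m k"
  shows "det (Mc x w A BS CR) = w^n * (-1/w)^k * det (transpose_mat BS * BS) *
    det (four_block_mat (0\<^sub>m r r) CR (transpose_mat CR)
      (x \<cdot>\<^sub>m 1\<^sub>m d - (1/w) \<cdot>\<^sub>m (transpose_mat A * ((1\<^sub>m n - BS * (Gi * transpose_mat BS)) * A))))"
proof -
  define Bt where "Bt = transpose_mat BS"
  define At where "At = transpose_mat A"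
  define Ct where "Ct = transpose_mat CR"
  have Bt: "Bt \<in> carrier_mat k n" and At: "At \<in> carrier_mat d n" and Ct: "Ct \<in> carrier_mat d r"
    unfolding Bt_def At_def Ct_def using A BS CR by auto
  define Hb where "Hb = BS * (Gi * Bt)"
  define Q where "Q = 1\<^sub>m n - Hb"
  have Hb: "Hb \<in> carrier_mat n n" unfolding Hb_def using BS Gi Bt by auto
  have Q: "Q \<in> carrier_mat n n" unfolding Q_def using Hb by auto
  have dims: "dim_row A = n" "dim_col A = d" "dim_row BS = n" "dim_col BS = k" "dim_row CR = r" "dim_col CR = d"
    "dim_row Bt = k" "dim_col Bt = n" "dim_row At = d" "dim_col At = n" "dim_row Ct = d" "dim_col Ct = r"
    "dim_row Gi = k" "dim_col Gi = k" "dim_row Hb = n" "dim_col Hb = n" "dim_row Q = n" "dim_col Q = n"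
    using A BS CR Bt At Ct Gi Hb Q by auto
  have a1: "Bt * (BS * Gi) = 1\<^sub>m k" using i1 dims unfolding Bt_def by (simp add: malg)
  have a2: "Gi * (Bt * BS) = 1\<^sub>m k" using i2 unfolding Bt_def by simp
  have QB: "Q * BS = 0\<^sub>m n k"
  proof -
    have "Q * BS = BS - BS * (Gi * (Bt * BS))" unfolding Q_def Hb_def using dims by (simp add: malg)
    then show ?thesis unfolding a2 using BS by simp
  qed
  define T where "T = four_block_mat (w \<cdot>\<^sub>m 1\<^sub>m n) BS Bt (0\<^sub>m k k)"
  define Ti where "Ti = four_block_mat ((1/w) \<cdot>\<^sub>m Q) (BS * Gi) (Gi * Bt) ((-w) \<cdot>\<^sub>m Gi)"
  define E where "E = four_block_mat (0\<^sub>m n r) A (0\<^sub>m k r) (0\<^sub>m k d)"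
  define Et where "Et = four_block_mat (0\<^sub>m r n) (0\<^sub>m r k) At (0\<^sub>m d k)"
  define D2 where "D2 = four_block_mat (0\<^sub>m r r) CR Ct (x \<cdot>\<^sub>m 1\<^sub>m d)"
  have cwI: "w \<cdot>\<^sub>m 1\<^sub>m n \<in> carrier_mat n n" and cQ: "(1/w) \<cdot>\<^sub>m Q \<in> carrier_mat n n"
    and cBG: "BS * Gi \<in> carrier_mat n k" and cGB: "Gi * Bt \<in> carrier_mat k n"
    and cwG: "(-w) \<cdot>\<^sub>m Gi \<in> carrier_mat k k" and ckk: "0\<^sub>m k k \<in> carrier_mat k k"
    using Q BS Gi Bt by auto
  have T: "T \<in> carrier_mat (n+k) (n+k)" unfolding T_def using BS Bt by auto
  have Ti: "Ti \<in> carrier_mat (n+k) (n+k)" unfolding Ti_def using cQ cBG cGB cwG by auto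
  have E: "E \<in> carrier_mat (n+k) (r+d)" unfolding E_def using A by auto
  have Et: "Et \<in> carrier_mat (r+d) (n+k)" unfolding Et_def using At by auto
  have D2: "D2 \<in> carrier_mat (r+d) (r+d)" unfolding D2_def using CR Ct by auto
  have McE: "Mc x w A BS CR = four_block_mat T E Et D2"
    unfolding Mc_def Let_def T_def E_def Et_def D2_def Bt_def At_def Ct_def using dims by simp
  have TiT: "Ti * T = 1\<^sub>m (n+k)"
  proof -
    have "Ti * T = four_block_mat ((1/w) \<cdot>\<^sub>m Q * (w \<cdot>\<^sub>m 1\<^sub>m n) + BS * Gi * Bt) ((1/w) \<cdot>\<^sub>m Q * BS + BS * Gi * 0\<^sub>m k k)
        (Gi * Bt * (w \<cdot>\<^sub>m 1\<^sub>m n) + (-w) \<cdot>\<^sub>m Gi * Bt) (Gi * Bt * BS + (-w) \<cdot>\<^sub>m Gi * 0\<^sub>m k k)"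
      unfolding Ti_def T_def by (rule mult_four_block_mat[OF cQ cBG cGB cwG cwI BS Bt ckk])
    also have "\<dots> = four_block_mat (1\<^sub>m n) (0\<^sub>m n k) (0\<^sub>m k n) (1\<^sub>m k)"
    proof -
      have e1: "(1/w) \<cdot>\<^sub>m Q * (w \<cdot>\<^sub>m 1\<^sub>m n) + BS * Gi * Bt = 1\<^sub>m n"
      proof -
        have "(1/w) \<cdot>\<^sub>m Q * (w \<cdot>\<^sub>m 1\<^sub>m n) + BS * Gi * Bt = w \<cdot>\<^sub>m ((1/w) \<cdot>\<^sub>m Q) + Hb"
          unfolding Hb_def using dims by (simp add: malg)
        also have "\<dots> = 1\<^sub>m n" unfolding Q_def using dims w
          by (intro eq_matI) (simp_all del: index_mult_mat add: index_mult_mat(2,3))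
        finally show ?thesis .
      qed
      have e2: "(1/w) \<cdot>\<^sub>m Q * BS + BS * Gi * 0\<^sub>m k k = 0\<^sub>m n k"
      proof -
        have "(1/w) \<cdot>\<^sub>m Q * BS = (1/w) \<cdot>\<^sub>m (Q * BS)" using dims by (simp add: malg)
        then show ?thesis unfolding QB using dims by simp
      qed
      have e3: "Gi * Bt * (w \<cdot>\<^sub>m 1\<^sub>m n) + (-w) \<cdot>\<^sub>m Gi * Bt = 0\<^sub>m k n"
      proof -
        have "Gi * Bt * (w \<cdot>\<^sub>m 1\<^sub>m n) + (-w) \<cdot>\<^sub>m Gi * Bt = w \<cdot>\<^sub>m (Gi * Bt) + (-w) \<cdot>\<^sub>m (Gi * Bt)"
          using dims by (simp add: malg)
        also have "\<dots> = 0\<^sub>m k n" using dims by (intro eq_matI) (simp_all del: index_mult_mat add: index_mult_mat(2,3))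
        finally show ?thesis .
      qed
      have e4: "Gi * Bt * BS + (-w) \<cdot>\<^sub>m Gi * 0\<^sub>m k k = 1\<^sub>m k"
      proof -
        have "Gi * Bt * BS = Gi * (Bt * BS)" using dims by (simp add: malg)
        then show ?thesis unfolding a2 using dims by simp
      qed
      show ?thesis unfolding e1 e2 e3 e4 ..
    qed
    also have "\<dots> = 1\<^sub>m (n+k)" by simp
    finally show ?thesis .
  qed
  have dT: "det T = w^n * ((-1/w)^k * det (transpose_mat BS * BS))"
  proof -
    have ci: "(1/w) \<cdot>\<^sub>m 1\<^sub>m n \<in> carrier_mat n n" by simp
    have "det T = det (w \<cdot>\<^sub>m 1\<^sub>m n) * det (0\<^sub>m k k - Bt * ((1/w) \<cdot>\<^sub>m 1\<^sub>m n) * BS)"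
      unfolding T_def by (rule schur[OF cwI BS Bt ckk ci]) (use w in \<open>intro eq_matI, auto\<close>)
    also have "Bt * ((1/w) \<cdot>\<^sub>m 1\<^sub>m n) * BS = (1/w) \<cdot>\<^sub>m (Bt * BS)" using dims by (simp add: malg)
    also have "0\<^sub>m k k - (1/w) \<cdot>\<^sub>m (Bt * BS) = (-1/w) \<cdot>\<^sub>m (Bt * BS)"
      using dims by (intro eq_matI) (simp_all del: index_mult_mat add: index_mult_mat(2,3))
    finally show ?thesis unfolding Bt_def using BS by simp
  qed
  have EtTi: "Et * Ti = four_block_mat (0\<^sub>m r n) (0\<^sub>m r k) ((1/w) \<cdot>\<^sub>m (At * Q)) (At * (BS * Gi))"
  proof -
    have "Et * Ti = four_block_mat (0\<^sub>m r n * ((1/w) \<cdot>\<^sub>m Q) + 0\<^sub>m r k * (Gi * Bt)) (0\<^sub>m r n * (BS * Gi) + 0\<^sub>m r k * ((-w) \<cdot>\<^sub>m Gi))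
       (At * ((1/w) \<cdot>\<^sub>m Q) + 0\<^sub>m d k * (Gi * Bt)) (At * (BS * Gi) + 0\<^sub>m d k * ((-w) \<cdot>\<^sub>m Gi))"
      unfolding Et_def Ti_def by (rule mult_four_block_mat[OF zero_carrier_mat zero_carrier_mat At zero_carrier_mat cQ cBG cGB cwG])
    also have "\<dots> = four_block_mat (0\<^sub>m r n) (0\<^sub>m r k) ((1/w) \<cdot>\<^sub>m (At * Q)) (At * (BS * Gi))"
      using dims by (simp add: malg)
    finally show ?thesis .
  qed
  have cAQ: "(1/w) \<cdot>\<^sub>m (At * Q) \<in> carrier_mat d n" and cABG: "At * (BS * Gi) \<in> carrier_mat d k"
    using At Q BS Gi by auto
  have EtTiE: "Et * Ti * E = four_block_mat (0\<^sub>m r r) (0\<^sub>m r d) (0\<^sub>m d r) ((1/w) \<cdot>\<^sub>m (At * (Q * A)))"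
  proof -
    have "Et * Ti * E = four_block_mat (0\<^sub>m r n * 0\<^sub>m n r + 0\<^sub>m r k * 0\<^sub>m k r) (0\<^sub>m r n * A + 0\<^sub>m r k * 0\<^sub>m k d)
       ((1/w) \<cdot>\<^sub>m (At * Q) * 0\<^sub>m n r + At * (BS * Gi) * 0\<^sub>m k r) ((1/w) \<cdot>\<^sub>m (At * Q) * A + At * (BS * Gi) * 0\<^sub>m k d)"
      unfolding EtTi E_def by (rule mult_four_block_mat[OF zero_carrier_mat zero_carrier_mat cAQ cABG zero_carrier_mat A zero_carrier_mat zero_carrier_mat])
    also have "\<dots> = four_block_mat (0\<^sub>m r r) (0\<^sub>m r d) (0\<^sub>m d r) ((1/w) \<cdot>\<^sub>m (At * (Q * A)))"
      using dims by (simp add: malg)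
    finally show ?thesis .
  qed
  have "det (Mc x w A BS CR) = det T * det (D2 - Et * Ti * E)"
    unfolding McE by (rule schur[OF T E Et D2 Ti TiT])
  also have "D2 - Et * Ti * E = four_block_mat (0\<^sub>m r r) CR Ct (x \<cdot>\<^sub>m 1\<^sub>m d - (1/w) \<cdot>\<^sub>m (At * (Q * A)))"
    unfolding EtTiE D2_def using CR Ct At Q A dims
    by (intro eq_matI) (simp_all del: index_mult_mat add: index_mult_mat(2,3))
  finally show ?thesis unfolding dT Q_def Hb_def Bt_def At_def Ct_def by (simp add: algebra_simps)
qed


lemma cancel3: "X * (Y * Z) = 1\<^sub>m m \<Longrightarrow> dim_col X = dim_row Y \<Longrightarrow> dim_col Y = dim_row Z \<Longrightarrow> dim_col Z = dim_row W
  \<Longrightarrow> dim_row W = m \<Longrightarrow> X * (Y * (Z * W)) = (W :: real mat)"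
proof -
  assume a: "X * (Y * Z) = 1\<^sub>m m" "dim_col X = dim_row Y" "dim_col Y = dim_row Z" "dim_col Z = dim_row W" "dim_row W = m"
  have e1: "Y * (Z * W) = (Y * Z) * W" by (rule massoc[symmetric]) (use a in auto)
  have e2: "X * ((Y * Z) * W) = (X * (Y * Z)) * W" by (rule massoc[symmetric]) (use a in auto)
  show ?thesis unfolding e1 e2 a(1) using a(5) by simp
qed

lemma arith_final:
  fixes a b p F M W x w :: real
  assumes s3: "a * p = (-x)^r * w^d * F" and s12: "M = w^n * (-1/w)^k * b * F"
    and pw: "W * w^n * (-1/w)^k = (-1)^k * w^d" and sg: "(-1::real)^(k+r) * (-1)^k = (-1)^r"
  shows "a * b * p = (-1)^(k+r) * x^r * W * M"
proof -
  have "(-1)^(k+r) * x^r * W * M = (-1)^(k+r) * x^r * (W * w^n * (-1/w)^k) * b * F"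
    unfolding s12 by (simp only: mult.assoc)
  also have "\<dots> = ((-1)^(k+r) * (-1)^k) * x^r * w^d * b * F" unfolding pw by (simp only: ac_simps)
  also have "\<dots> = (-1)^r * x^r * w^d * b * F" unfolding sg ..
  also have "\<dots> = b * ((-x)^r * w^d * F)" by (simp only: power_minus[of x r] ac_simps)
  also have "\<dots> = a * b * p" unfolding s3[symmetric] by (simp only: ac_simps)
  finally show ?thesis ..
qed

lemma main_alg:
  fixes A BS CR :: "real mat"
  assumes A: "A \<in> carrier_mat n d" and BS: "BS \<in> carrier_mat n k" and CR: "CR \<in> carrier_mat r d"
    and w: "w \<noteq> 0"
  shows "det (CR * transpose_mat CR) * det (transpose_mat BS * BS) *
      det ((x*w) \<cdot>\<^sub>m 1\<^sub>m d - transpose_mat ((1\<^sub>m n - BS * pinv BS) * A * (1\<^sub>m d - pinv CR * CR))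
              * ((1\<^sub>m n - BS * pinv BS) * A * (1\<^sub>m d - pinv CR * CR)))
    = (-1)^(k+r) * x^r * w powi (int d + int k - int n) * det (Mc x w A BS CR)"
proof (cases "det (transpose_mat BS * BS) = 0 \<or> det (CR * transpose_mat CR) = 0")
  case True
  then have "det (Mc x w A BS CR) = 0" using Mc_degen_B[OF A BS CR] Mc_degen_C[OF A BS CR] by blast
  then show ?thesis using True by auto
next
  case False
  define Bt where "Bt = transpose_mat BS"
  define At where "At = transpose_mat A"
  define Ct where "Ct = transpose_mat CR"
  have Bt: "Bt \<in> carrier_mat k n" and At: "At \<in> carrier_mat d n" and Ct: "Ct \<in> carrier_mat d r"
    unfolding Bt_def At_def Ct_def using A BS CR by auto
  have G: "Bt * BS \<in> carrier_mat k k" and Gc: "CR * Ct \<in> carrier_mat r r" using Bt BS CR Ct by auto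
  obtain Gi where Gi: "Gi \<in> carrier_mat k k" "Bt * BS * Gi = 1\<^sub>m k" "Gi * (Bt * BS) = 1\<^sub>m k"
    using inv_exists[OF G] False unfolding Bt_def by auto
  obtain Gci where Gci: "Gci \<in> carrier_mat r r" "CR * Ct * Gci = 1\<^sub>m r" "Gci * (CR * Ct) = 1\<^sub>m r"
    using inv_exists[OF Gc] False unfolding Ct_def by auto
  have dims: "dim_row A = n" "dim_col A = d" "dim_row BS = n" "dim_col BS = k" "dim_row CR = r" "dim_col CR = d"
    "dim_row Bt = k" "dim_col Bt = n" "dim_row At = d" "dim_col At = n" "dim_row Ct = d" "dim_col Ct = r"
    "dim_row Gi = k" "dim_col Gi = k" "dim_row Gci = r" "dim_col Gci = r"
    using A BS CR Bt At Ct Gi Gci by auto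
  have tr: "transpose_mat Bt = BS" "transpose_mat Ct = CR" "transpose_mat At = A"
    unfolding Bt_def Ct_def At_def by simp_all
  have GiT: "transpose_mat Gi = Gi"
    by (rule inv_sym[OF G Gi(1) _ Gi(2)]) (use dims tr in \<open>simp add: malg Bt_def[symmetric]\<close>)
  have GciT: "transpose_mat Gci = Gci"
    by (rule inv_sym[OF Gc Gci(1) _ Gci(2)]) (use dims tr in \<open>simp add: malg Ct_def[symmetric]\<close>)
  have b1: "Gi * (Bt * BS) = 1\<^sub>m k" using Gi by simp
  have b2: "Bt * (BS * Gi) = 1\<^sub>m k" using Gi dims by (simp add: malg)
  have c1: "CR * (Ct * Gci) = 1\<^sub>m r" using Gci dims by (simp add: malg)
  have c2: "Gci * (CR * Ct) = 1\<^sub>m r" using Gci by simp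
  have b1W: "Gi * (Bt * (BS * W)) = W" if "dim_row W = k" for W using cancel3[OF b1] that dims by simp
  have b2W: "Bt * (BS * (Gi * W)) = W" if "dim_row W = k" for W using cancel3[OF b2] that dims by simp
  have c1W: "CR * (Ct * (Gci * W)) = W" if "dim_row W = r" for W using cancel3[OF c1] that dims by simp
  have c2W: "Gci * (CR * (Ct * W)) = W" if "dim_row W = r" for W using cancel3[OF c2] that dims by simp
  have pB: "pinv BS = Gi * Bt"
  proof (rule pinv_eq[OF BS])
    show "MPc BS (Gi * Bt)" unfolding MPc_def
      using dims b1 b2 b1W b2W GiT tr Gi(1) Bt by (simp add: malg Bt_def[symmetric])
  qed
  have pC: "pinv CR = Ct * Gci"
  proof (rule pinv_eq[OF CR])
    show "MPc CR (Ct * Gci)" unfolding MPc_def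
      using dims c1 c2 c1W c2W GciT tr Gci(1) Ct by (simp add: malg Ct_def[symmetric])
  qed
  define Q where "Q = 1\<^sub>m n - BS * (Gi * Bt)"
  define P where "P = 1\<^sub>m d - Ct * (Gci * CR)"
  have Q: "Q \<in> carrier_mat n n" and P: "P \<in> carrier_mat d d" unfolding Q_def P_def using dims by auto
  have HbT: "transpose_mat (BS * (Gi * Bt)) = BS * (Gi * Bt)" using dims GiT tr by (simp add: malg Bt_def[symmetric])
  have HcT: "transpose_mat (Ct * (Gci * CR)) = Ct * (Gci * CR)" using dims GciT tr by (simp add: malg Ct_def[symmetric])
  have cHb: "BS * (Gi * Bt) \<in> carrier_mat n n" and cHc: "Ct * (Gci * CR) \<in> carrier_mat d d"
    using BS Gi Bt Ct Gci CR by auto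
  have QT: "transpose_mat Q = Q"
    unfolding Q_def using transpose_minus[OF one_carrier_mat cHb] HbT by simp
  have PT: "transpose_mat P = P"
    unfolding P_def using transpose_minus[OF one_carrier_mat cHc] HcT by simp
  have QQ: "Q * Q = Q"
  proof -
    have "Q * Q = Q - BS * (Gi * (Bt * Q))" unfolding Q_def using dims by (simp add: malg)
    also have "Bt * Q = 0\<^sub>m k n"
    proof -
      have "Bt * Q = Bt - Bt * (BS * (Gi * Bt))" unfolding Q_def using dims by (simp add: malg)
      then show ?thesis using b2W[of Bt] dims Bt by simp
    qed
    finally show ?thesis using dims Q by simp
  qed
  have QQW: "Q * (Q * W) = Q * W" if "dim_row W = n" for W
    using QQ that dims Q by (simp add: massoc[symmetric])
  define K where "K = At * (Q * A)"
  have K: "K \<in> carrier_mat d d" unfolding K_def using At Q A by auto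
  have QAP: "transpose_mat (Q * A * P) * (Q * A * P) = P * (K * P)"
    unfolding K_def using dims Q P QT PT QQW by (simp add: malg At_def[symmetric])
  have LHS: "transpose_mat ((1\<^sub>m n - BS * pinv BS) * A * (1\<^sub>m d - pinv CR * CR)) * ((1\<^sub>m n - BS * pinv BS) * A * (1\<^sub>m d - pinv CR * CR))
     = P * (K * P)"
  proof -
    have "1\<^sub>m n - BS * pinv BS = Q" unfolding pB Q_def ..
    moreover have "1\<^sub>m d - pinv CR * CR = P" unfolding pC P_def using dims by (simp add: malg)
    ultimately show ?thesis using QAP by simp
  qed
  have s3: "det (CR * Ct) * det ((x*w) \<cdot>\<^sub>m 1\<^sub>m d - P * (K * P))
       = (-x)^r * w^d * det (four_block_mat (0\<^sub>m r r) CR Ct (x \<cdot>\<^sub>m 1\<^sub>m d - (1/w) \<cdot>\<^sub>m K))"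
    using step3[OF CR K w Gci(1)] Gci unfolding P_def Ct_def by simp
  have s12: "det (Mc x w A BS CR) = w^n * (-1/w)^k * det (Bt * BS) *
      det (four_block_mat (0\<^sub>m r r) CR Ct (x \<cdot>\<^sub>m 1\<^sub>m d - (1/w) \<cdot>\<^sub>m K))"
    using step12[OF A BS CR w Gi(1)] Gi unfolding K_def Q_def Bt_def At_def Ct_def by simp
  have pw: "w powi (int d + int k - int n) * w^n * (-1/w)^k = (-1)^k * w^d"
  proof -
    have "w powi (int d + int k - int n) = w powi (int (d+k)) / w powi (int n)"
      using w by (simp add: power_int_diff)
    moreover have "int d + int k = int (d + k)" by simp
    ultimately have "w powi (int d + int k - int n) = w^(d+k) / w^n" by (metis power_int_of_nat)
    then have e: "w powi (int d + int k - int n) * w^n = w^d * w^k" using w by (simp add: power_add field_simps)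
    have f: "w^k * (-1/w)^k = (-1)^k"
    proof -
      have "w^k * (-1/w)^k = (w * (-1/w))^k" by (simp only: power_mult_distrib)
      also have "w * (-1/w) = -1" using w by simp
      finally show ?thesis .
    qed
    have "w powi (int d + int k - int n) * w^n * (-1/w)^k = w^d * (w^k * (-1/w)^k)" unfolding e by simp
    then show ?thesis unfolding f by simp
  qed
  have sg: "(-1::real)^(k+r) * (-1)^k = (-1)^r"
    by (simp add: power_add)
  have "det (CR * Ct) * det (Bt * BS) * det ((x*w) \<cdot>\<^sub>m 1\<^sub>m d - P * (K * P))
     = (-1)^(k+r) * x^r * w powi (int d + int k - int n) * det (Mc x w A BS CR)"
    by (rule arith_final[OF s3 s12 pw sg])
  then show ?thesis unfolding LHS Bt_def Ct_def .
qed

theorem proposition3p2: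
  fixes A B C :: "real mat" and n d dB nC k r :: nat and S R :: "nat set" and x w :: real
  assumes "A \<in> carrier_mat n d" and "B \<in> carrier_mat n dB" and "C \<in> carrier_mat nC d"
    and "k \<le> vec_space.rank n B" and "r \<le> vec_space.rank nC C"
    and "S \<subseteq> {0..<dB}" and "card S = k" and "R \<subseteq> {0..<nC}" and "card R = r"
    and "w \<noteq> 0"
  shows "det (rows_sub C R * transpose_mat (rows_sub C R))
         * det (transpose_mat (cols_sub B S) * cols_sub B S)
         * pSR S R (x * w) A B C
       = (-1) ^ (k + r) * x ^ r * w powi (int d + int k - int n)
         * pderivs (map Inl (sorted_list_of_set ({0..<dB} - S))
                    @ map Inr (sorted_list_of_set ({0..<nC} - R)))
                   (Hvar x w A B C) (\<lambda>_. 0)"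
proof -
  note A = assms(1) and B = assms(2) and C = assms(3)
  have BS: "cols_sub B S \<in> carrier_mat n k" using cols_sub_carrier[OF B assms(6)] assms(7) by simp
  have CR: "rows_sub C R \<in> carrier_mat r d" using rows_sub_carrier[OF C assms(8)] assms(9) by simp
  have dims: "dim_row A = n" "dim_col A = d" "dim_row B = n" "dim_col C = d" using A B C by auto
  have rhs: "pderivs (map Inl (sorted_list_of_set ({0..<dB} - S))
                    @ map Inr (sorted_list_of_set ({0..<nC} - R)))
                   (Hvar x w A B C) (\<lambda>_. 0) = det (Mc x w A (cols_sub B S) (rows_sub C R))"
    using pderivs_Hvar[OF A B C, of S R x w "\<lambda>_. 0"] compress_H[OF A B C assms(6,8,7,9), of x w] by simp
  have lhs: "pSR S R (x * w) A B C =
      det ((x*w) \<cdot>\<^sub>m 1\<^sub>m d - transpose_mat ((1\<^sub>m n - cols_sub B S * pinv (cols_sub B S)) * A * (1\<^sub>m d - pinv (rows_sub C R) * rows_sub C R))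
              * ((1\<^sub>m n - cols_sub B S * pinv (cols_sub B S)) * A * (1\<^sub>m d - pinv (rows_sub C R) * rows_sub C R)))"
    unfolding pSR_def Qmat_def Pmat_def Let_def dims ..
  show ?thesis unfolding rhs lhs
    using main_alg[OF A BS CR assms(10), of x] by (simp add: mult.assoc)
qed

end
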